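(* Let $f$ be a germ of a holomorphic self-map of $\mathbb{C}^2$ tangent to the identity at a fixed point $p$, of order $k+1$, with characteristic direction $[v]$ such that: (1) $[v]$ is a characteristic direction of degree $s\le\infty$; (2) $[v]$ is non-degenerate of degree $r+1$ with $k<r<s$; (3) $[v]$ is of order one in degree $t+1$ with $k\le t\le r$. Then $f^{-1}$ also satisfies (1)–(3) with respect to $[v]$ with the same $k,r,s,t$. If $r=t$, then $[v]$ is transversally attracting for $f$ if and only if it is transversally attracting for $f^{-1}$. If $r=2t$, then $[v]$ is transversally attracting for $f$ or for $f^{-1}$ (or both).
   Context: Tangent to the identity at $p$: $df_p=\mathrm{Id}$. With $p=0$, $f(x)=x+\sum_{j\ge k+1}P_j(x)$, $P_j$ homogeneous of degree $j$, $P_{k+1}\not\equiv0$; $k+1$ is the order. $[v]$ is a characteristic direction of a homogeneous map $Q$ if $Q(v)=\lambda v$ ($v\neq0$); degenerate if $\lambda=0$, non-degenerate if $\lambda\ne0$. Degree $s$: characteristic direction of $P_{k+1},\dots,P_s$. Non-degenerate of degree $r+1$: degenerate for $P_{k+1},\dots,P_r$, non-degenerate for $P_{r+1}$. In linear coordinates $(z,w)$ with $[v]=[1:0]$ and $P_j=(p_j,q_j)$, $l_j$ is the order of vanishing of $q_j(1,u)$ at $u=0$; order one in degree $t+1$ means $l_{t+1}=1<l_j$ for $k+1\le j\le t$. Under (1)–(3) one writes in such coordinates $f(z,w)=\big(z(1+z^rR(z))+wU(z,w),\ w(1+z^tT(z)+wV(z,w))+z^{s+1}S(z)\big)$ with $R,S,T,U,V$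 holomorphic, $a:=R(0)\ne0$, $b:=T(0)\ne0$, $U=O(|(z,w)|^k)$, $V=O(|(z,w)|^{k-1})$. Director: $\Delta=-b\alpha^t$ with $\alpha$ an $r$-th root of $-1/(ar)$ chosen so that $\mathrm{Re}\,\Delta>0$ whenever possible, if $t<r$; $\Delta=\frac1r(\frac ba-(r-k+1))$ if $t=r$. $[v]$ is transversally attracting if $\mathrm{Re}\,\Delta>0$. *)

theory Defs
  imports "HOL-Analysis.Analysis"
begin

type_synonym c2 = "complex \<times> complex"

definition cmul :: "complex \<Rightarrow> c2 \<Rightarrow> c2" where
  "cmul c x = (c * fst x, c * snd x)"

definition det2 :: "c2 \<Rightarrow> c2 \<Rightarrow> complex" where
  "det2 x y = fst x * snd y - snd x * fst y"

definition holo2_on :: "c2 set \<Rightarrow> (c2 \<Rightarrow> c2) \<Rightarrow> bool" where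
  "holo2_on U f \<longleftrightarrow> (\<forall>z\<in>U. \<exists>L. (f has_derivative L) (at z) \<and>
                         (\<forall>c x. L (cmul c x) = cmul c (L x)))"

definition holo_germ_fixing :: "(c2 \<Rightarrow> c2) \<Rightarrow> c2 \<Rightarrow> bool" where
  "holo_germ_fixing f p \<longleftrightarrow> f p = p \<and> (\<exists>U. open U \<and> p \<in> U \<and> holo2_on U f)"

text \<open>Homogeneous part of degree j of f at p (Taylor expansion of f(p+x)-p):
  the coefficient of t^j in t \<mapsto> f(p + t x) - p.\<close>
definition hpart :: "(c2 \<Rightarrow> c2) \<Rightarrow> c2 \<Rightarrow> nat \<Rightarrow> c2 \<Rightarrow> c2" where
  "hpart f p j x =
     ((deriv ^^ j) (\<lambda>t. fst (f (p + cmul t x) - p)) 0 / fact j,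
      (deriv ^^ j) (\<lambda>t. snd (f (p + cmul t x) - p)) 0 / fact j)"

definition has_order :: "(c2 \<Rightarrow> c2) \<Rightarrow> c2 \<Rightarrow> nat \<Rightarrow> bool" where
  "has_order f p n \<longleftrightarrow> n \<ge> 2 \<and> (\<forall>j. 2 \<le> j \<and> j < n \<longrightarrow> hpart f p j = (\<lambda>x. 0))
                         \<and> hpart f p n \<noteq> (\<lambda>x. 0)"

definition char_dir :: "(c2 \<Rightarrow> c2) \<Rightarrow> c2 \<Rightarrow> bool" where
  "char_dir Q v \<longleftrightarrow> v \<noteq> 0 \<and> (\<exists>c. Q v = cmul c v)"

definition degenerate_char_dir :: "(c2 \<Rightarrow> c2) \<Rightarrow> c2 \<Rightarrow> bool" where
  "degenerate_char_dir Q v \<longleftrightarrow> v \<noteq> 0 \<and> Q v = 0"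

definition nondegenerate_char_dir :: "(c2 \<Rightarrow> c2) \<Rightarrow> c2 \<Rightarrow> bool" where
  "nondegenerate_char_dir Q v \<longleftrightarrow> v \<noteq> 0 \<and> (\<exists>c. c \<noteq> 0 \<and> Q v = cmul c v)"

definition char_dir_degree :: "(c2 \<Rightarrow> c2) \<Rightarrow> c2 \<Rightarrow> nat \<Rightarrow> c2 \<Rightarrow> enat \<Rightarrow> bool" where
  "char_dir_degree f p k v s \<longleftrightarrow>
     (\<forall>j. k + 1 \<le> j \<and> enat j \<le> s \<longrightarrow> char_dir (hpart f p j) v) \<and>
     (\<forall>n. s = enat n \<longrightarrow> \<not> char_dir (hpart f p (Suc n)) v)"

definition nondeg_degree :: "(c2 \<Rightarrow> c2) \<Rightarrow> c2 \<Rightarrow> nat \<Rightarrow> c2 \<Rightarrow> nat \<Rightarrow> bool" where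
  "nondeg_degree f p k v r \<longleftrightarrow>
     (\<forall>j. k + 1 \<le> j \<and> j \<le> r \<longrightarrow> degenerate_char_dir (hpart f p j) v) \<and>
     nondegenerate_char_dir (hpart f p (r + 1)) v"

definition vanish_order :: "(complex \<Rightarrow> complex) \<Rightarrow> enat" where
  "vanish_order g = (if \<exists>n. (deriv ^^ n) g 0 \<noteq> 0
                     then enat (LEAST n. (deriv ^^ n) g 0 \<noteq> 0) else \<infinity>)"

text \<open>Linear coordinates (z,w) with x = z v + w e, so that [v] = [1:0];
  e is some vector completing v to a basis.\<close>
definition compl_vec :: "c2 \<Rightarrow> c2" where
  "compl_vec v = (SOME e. det2 v e \<noteq> 0)"

definition wcoord :: "c2 \<Rightarrow> c2 \<Rightarrow> complex" where
  "wcoord v x = det2 v x / det2 v (compl_vec v)"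

text \<open>l_j: order of vanishing of q_j(1,u) at u = 0, where P_j = (p_j,q_j) in these coordinates.\<close>
definition lj :: "(c2 \<Rightarrow> c2) \<Rightarrow> c2 \<Rightarrow> c2 \<Rightarrow> nat \<Rightarrow> enat" where
  "lj f p v j = vanish_order (\<lambda>u. wcoord v (hpart f p j (v + cmul u (compl_vec v))))"

definition order_one_degree :: "(c2 \<Rightarrow> c2) \<Rightarrow> c2 \<Rightarrow> nat \<Rightarrow> c2 \<Rightarrow> nat \<Rightarrow> bool" where
  "order_one_degree f p k v t \<longleftrightarrow>
     lj f p v (t + 1) = 1 \<and> (\<forall>j. k + 1 \<le> j \<and> j \<le> t \<longrightarrow> 1 < lj f p v j)"

text \<open>Coefficients a = R(0) and b = T(0) of the normal form
  f(z,w) = (z(1+z^r R(z)) + w U, w(1 + z^t T(z) + w V) + z^(s+1) S) in the above coordinates: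
  a is the coefficient of z^(r+1) in the first component, i.e. P_(r+1)(v) = a v;
  b is the coefficient of z^t w in the second component, i.e. d/du q_(t+1)(1,u) at u=0.\<close>
definition coef_a :: "(c2 \<Rightarrow> c2) \<Rightarrow> c2 \<Rightarrow> c2 \<Rightarrow> nat \<Rightarrow> complex" where
  "coef_a f p v r = (SOME a. hpart f p (r + 1) v = cmul a v)"

definition coef_b :: "(c2 \<Rightarrow> c2) \<Rightarrow> c2 \<Rightarrow> c2 \<Rightarrow> nat \<Rightarrow> complex" where
  "coef_b f p v t = deriv (\<lambda>u. wcoord v (hpart f p (t + 1) (v + cmul u (compl_vec v)))) 0"

text \<open>[v] transversally attracting: Re \<Delta> > 0 for the director \<Delta>; for t < r the root \<alpha>
  is chosen so that Re \<Delta> > 0 whenever possible.\<close>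
definition transv_attracting :: "(c2 \<Rightarrow> c2) \<Rightarrow> c2 \<Rightarrow> nat \<Rightarrow> nat \<Rightarrow> nat \<Rightarrow> c2 \<Rightarrow> bool" where
  "transv_attracting f p k r t v \<longleftrightarrow>
     (let a = coef_a f p v r; b = coef_b f p v t in
      if t < r then (\<exists>\<alpha>. \<alpha> ^ r = - 1 / (a * of_nat r) \<and> 0 < Re (- b * \<alpha> ^ t))
      else 0 < Re ((b / a - (of_nat r - of_nat k + 1)) / of_nat r))"

end

theory Submission
  imports Defs "HOL-Complex_Analysis.Complex_Analysis"
begin


definition tay :: "(complex \<Rightarrow> complex) \<Rightarrow> nat \<Rightarrow> complex" where
  "tay h j = (deriv ^^ j) h 0 / fact j"

lemma tay_bound:
  assumes hol: "h holomorphic_on ball 0 R" and cont: "continuous_on (cball 0 R) h" and R: "0 < R"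
    and M: "\<And>x. norm x = R \<Longrightarrow> norm (h x) \<le> M"
  shows "norm (tay h n) \<le> M / R^n"
proof -
  have "norm ((deriv ^^ n) h 0) \<le> fact n * M / R^n"
    by (rule Cauchy_inequality[OF hol cont R]) (use M in \<open>auto simp: norm_minus_commute\<close>)
  then show ?thesis unfolding tay_def by (simp add: norm_divide field_simps)
qed


lemma taylor_tail_bound:
  assumes hol: "h holomorphic_on ball 0 R" and cont: "continuous_on (cball 0 R) h" and R: "0 < R"
    and M: "\<And>x. norm x = R \<Longrightarrow> norm (h x) \<le> M"
    and w: "norm w \<le> R/2"
  shows "norm (h w - (\<Sum>j\<le>m. tay h j * w^j)) \<le> 2*M*(norm w / R)^(Suc m)"
proof -
  have wb: "w \<in> ball 0 R" using w R by auto
  have s: "(\<lambda>n. tay h n * w^n) sums h w"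
    using holomorphic_power_series[OF hol wb] by (simp add: tay_def)
  have s2: "(\<lambda>i. tay h (i + Suc m) * w^(i + Suc m)) sums (h w - (\<Sum>j\<le>m. tay h j * w^j))"
    using sums_split_initial_segment[OF s, of "Suc m"] by (simp add: lessThan_Suc_atMost)
  have x: "norm (complex_of_real R) = R" using R by simp
  have M0: "0 \<le> M" using M[OF x] norm_ge_zero order_trans by blast
  define q where "q = norm w / R"
  have q0: "0 \<le> q" and q1: "q \<le> 1/2" using w R by (auto simp: q_def field_simps)
  have b: "norm (tay h (i + Suc m) * w^(i + Suc m)) \<le> M * q^(Suc m) * q^i" for i
  proof -
    have "norm (tay h (i + Suc m) * w^(i + Suc m)) \<le> M / R^(i + Suc m) * norm w ^ (i + Suc m)"
      unfolding norm_mult norm_power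
      by (rule mult_right_mono[OF tay_bound[OF hol cont R M]]) auto
    also have "\<dots> = M * q^(i + Suc m)" using R by (simp add: q_def power_divide)
    also have "\<dots> = M * q^(Suc m) * q^i" by (simp add: power_add)
    finally show ?thesis .
  qed
  have gs: "(\<lambda>i. M * q^(Suc m) * q^i) sums (M * q^(Suc m) * (1 / (1 - q)))"
    by (rule sums_mult[OF geometric_sums]) (use q0 q1 in auto)
  have "norm (suminf (\<lambda>i. tay h (i + Suc m) * w^(i + Suc m))) \<le> suminf (\<lambda>i. M * q^(Suc m) * q^i)"
    by (rule norm_suminf_le[OF b sums_summable[OF gs]])
  then have "norm (h w - (\<Sum>j\<le>m. tay h j * w^j)) \<le> M * q^(Suc m) * (1 / (1 - q))"
    using sums_unique[OF s2] sums_unique[OF gs] by simp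
  also have "\<dots> \<le> M * q^(Suc m) * 2"
    by (rule mult_left_mono) (use q0 q1 M0 in \<open>auto simp: field_simps\<close>)
  finally show ?thesis by (simp add: q_def mult_ac)
qed

definition bo :: "nat \<Rightarrow> (complex \<Rightarrow> complex) \<Rightarrow> bool" where
  "bo m h \<longleftrightarrow> (\<exists>C \<delta>. 0 \<le> C \<and> 0 < \<delta> \<and> (\<forall>t. norm t < \<delta> \<longrightarrow> norm (h t) \<le> C * norm t ^ m))"

lemma boI: "0 < \<delta> \<Longrightarrow> (\<And>t. norm t < \<delta> \<Longrightarrow> norm (h t) \<le> C * norm t ^ m) \<Longrightarrow> bo m h"
  unfolding bo_def
  apply (rule exI[of _ "max C 0"], rule exI[of _ \<delta>])
  apply (auto intro: order_trans[OF _ mult_right_mono[of C "max C 0"]])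
  done

lemma boE:
  assumes "bo m h"
  obtains C \<delta> where "0 \<le> C" "0 < \<delta>" "\<And>t. norm t < \<delta> \<Longrightarrow> norm (h t) \<le> C * norm t ^ m"
  using assms unfolding bo_def by blast

lemma bo_add: assumes "bo m f" "bo m g" shows "bo m (\<lambda>t. f t + g t)"
proof -
  obtain C1 d1 where 1: "0 \<le> C1" "0 < d1" "\<And>t. norm t < d1 \<Longrightarrow> norm (f t) \<le> C1 * norm t ^ m"
    using assms(1) by (meson boE)
  obtain C2 d2 where 2: "0 \<le> C2" "0 < d2" "\<And>t. norm t < d2 \<Longrightarrow> norm (g t) \<le> C2 * norm t ^ m"
    using assms(2) by (meson boE)
  show ?thesis
  proof (rule boI[of "min d1 d2" _ "C1 + C2"])
    fix t :: complex assume "norm t < min d1 d2"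
    then have "norm (f t) \<le> C1 * norm t ^ m" "norm (g t) \<le> C2 * norm t ^ m" using 1 2 by auto
    then show "norm (f t + g t) \<le> (C1 + C2) * norm t ^ m"
      by (smt (verit, best) distrib_right norm_triangle_ineq)
  qed (use 1 2 in auto)
qed

lemma bo_minus: assumes "bo m f" shows "bo m (\<lambda>t. - f t)"
  using assms unfolding bo_def by simp

lemma bo_diff: assumes "bo m f" "bo m g" shows "bo m (\<lambda>t. f t - g t)"
  using bo_add[OF assms(1) bo_minus[OF assms(2)]] by simp

lemma bo_0: "bo m (\<lambda>t. 0)"
  unfolding bo_def by (rule exI[of _ 0], rule exI[of _ 1]) auto

lemma bo_mono: assumes "bo m f" "n \<le> m" shows "bo n f"
proof -
  obtain C d where 1: "0 \<le> C" "0 < d" "\<And>t. norm t < d \<Longrightarrow> norm (f t) \<le> C * norm t ^ m"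
    using assms(1) by (meson boE)
  show ?thesis
  proof (rule boI[of "min d 1" _ C])
    fix t :: complex assume t: "norm t < min d 1"
    have "norm t ^ m \<le> norm t ^ n" using t assms(2) by (intro power_decreasing) auto
    then show "norm (f t) \<le> C * norm t ^ n"
      using 1(3)[of t] t 1(1) by (meson min_less_iff_conj mult_left_mono order_trans)
  qed (use 1 in auto)
qed

lemma bo_mult: assumes "bo m f" "bo n g" shows "bo (m + n) (\<lambda>t. f t * g t)"
proof -
  obtain C1 d1 where 1: "0 \<le> C1" "0 < d1" "\<And>t. norm t < d1 \<Longrightarrow> norm (f t) \<le> C1 * norm t ^ m"
    using assms(1) by (meson boE)
  obtain C2 d2 where 2: "0 \<le> C2" "0 < d2" "\<And>t. norm t < d2 \<Longrightarrow> norm (g t) \<le> C2 * norm t ^ n"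
    using assms(2) by (meson boE)
  show ?thesis
  proof (rule boI[of "min d1 d2" _ "C1 * C2"])
    fix t :: complex assume "norm t < min d1 d2"
    then have "norm (f t) \<le> C1 * norm t ^ m" "norm (g t) \<le> C2 * norm t ^ n" using 1 2 by auto
    then have "norm (f t * g t) \<le> (C1 * norm t ^ m) * (C2 * norm t ^ n)"
      unfolding norm_mult by (intro mult_mono mult_nonneg_nonneg) (use 1(1) 2(1) in auto)
    then show "norm (f t * g t) \<le> (C1 * C2) * norm t ^ (m + n)"
      by (simp add: power_add mult_ac)
  qed (use 1 2 in auto)
qed

lemma bo_cmult: assumes "bo m f" shows "bo m (\<lambda>t. c * f t)"
proof -
  obtain C1 d1 where 1: "0 \<le> C1" "0 < d1" "\<And>t. norm t < d1 \<Longrightarrow> norm (f t) \<le> C1 * norm t ^ m"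
    using assms(1) by (meson boE)
  show ?thesis
  proof (rule boI[of d1 _ "norm c * C1"])
    fix t :: complex assume "norm t < d1"
    then show "norm (c * f t) \<le> (norm c * C1) * norm t ^ m"
      using 1(3)[of t] by (simp add: norm_mult mult.assoc mult_left_mono)
  qed (use 1 in auto)
qed

lemma bo_pow: "bo m (\<lambda>t. c * t ^ m)"
  by (rule boI[of 1 _ "norm c"]) (auto simp: norm_mult norm_power)

lemma bo_bounded: assumes "0 < d" "\<And>t. norm t < d \<Longrightarrow> norm (f t) \<le> C" shows "bo 0 f"
  by (rule boI[OF assms(1)]) (use assms(2) in auto)

lemma bo_cong: assumes "bo m f" "0 < d" "\<And>t. norm t < d \<Longrightarrow> f t = g t" shows "bo m g"
proof -
  obtain C1 d1 where 1: "0 \<le> C1" "0 < d1" "\<And>t. norm t < d1 \<Longrightarrow> norm (f t) \<le> C1 * norm t ^ m"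
    using assms(1) by (meson boE)
  show ?thesis
  proof (rule boI[of "min d1 d" _ C1])
    fix t :: complex assume "norm t < min d1 d"
    then show "norm (g t) \<le> C1 * norm t ^ m" using 1(3)[of t] assms(3)[of t] by auto
  qed (use 1 assms in auto)
qed

lemma bo_zero_coeff: assumes "bo (Suc m) (\<lambda>t. c * t ^ m)" shows "c = 0"
proof (rule ccontr)
  assume c: "c \<noteq> 0"
  obtain C d where 1: "0 \<le> C" "0 < d" "\<And>t. norm t < d \<Longrightarrow> norm (c * t ^ m) \<le> C * norm t ^ Suc m"
    using assms by (meson boE)
  define e where "e = min (d/2) (norm c / (2 * (C + 1)))"
  have e0: "0 < e" using c 1 by (auto simp: e_def)
  have "norm (c * (complex_of_real e) ^ m) \<le> C * norm (complex_of_real e) ^ Suc m"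
    using 1(3)[of "complex_of_real e"] e0 1(2) by (auto simp: e_def)
  then have "norm c * e ^ m \<le> C * e * e ^ m" using e0 by (simp add: norm_mult norm_power mult_ac)
  then have "norm c \<le> C * e" using e0 by simp
  also have "C * e \<le> C * (norm c / (2 * (C + 1)))" using 1(1) by (intro mult_left_mono) (auto simp: e_def)
  also have "\<dots> < norm c" using c 1(1) by (simp add: field_simps) (smt (verit) mult_nonneg_nonneg norm_ge_zero zero_less_norm_iff)
  finally show False by simp
qed

lemma small_of_bo2:
  assumes "bo 2 (\<lambda>t. A t - t)"
  obtains d where "0 < d" "\<And>t. norm t < d \<Longrightarrow> norm (A t) \<le> 2 * norm t"
proof -
  obtain C d where 1: "0 \<le> C" "0 < d" "\<And>t. norm t < d \<Longrightarrow> norm (A t - t) \<le> C * norm t ^ 2"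
    using assms by (meson boE)
  show ?thesis
  proof (rule that[of "min d (1 / (C + 1))"])
    fix t :: complex assume t: "norm t < min d (1 / (C + 1))"
    have "norm (A t) \<le> norm t + norm (A t - t)" by (metis add.commute diff_add_cancel norm_triangle_ineq)
    also have "norm (A t - t) \<le> C * norm t * norm t" using 1(3)[of t] t by (simp add: power2_eq_square mult_ac)
    also have "C * norm t \<le> 1"
    proof -
      have "C * norm t \<le> (C + 1) * norm t" using 1(1) by (simp add: mult_right_mono)
      also have "\<dots> \<le> 1" using t 1(1) by (simp add: field_simps)
      finally show ?thesis .
    qed
    then have "C * norm t * norm t \<le> norm t" using mult_right_mono[of "C * norm t" 1 "norm t"] by simp
    finally show "norm (A t) \<le> 2 * norm t" by simp
  qed (use 1 in auto)
qed

lemma bo_comp: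
  assumes "bo m H" "0 < d" "\<And>t. norm t < d \<Longrightarrow> norm (A t) \<le> 2 * norm t"
  shows "bo m (\<lambda>t. H (A t))"
proof -
  obtain C d1 where 1: "0 \<le> C" "0 < d1" "\<And>t. norm t < d1 \<Longrightarrow> norm (H t) \<le> C * norm t ^ m"
    using assms(1) by (meson boE)
  show ?thesis
  proof (rule boI[of "min d (d1/2)" _ "C * 2^m"])
    fix t :: complex assume t: "norm t < min d (d1/2)"
    have At: "norm (A t) \<le> 2 * norm t" using assms(3) t by auto
    then have "norm (A t) < d1" using t by auto
    then have "norm (H (A t)) \<le> C * norm (A t) ^ m" using 1 by auto
    also have "\<dots> \<le> C * (2 * norm t) ^ m" using At 1(1) by (intro mult_left_mono power_mono) auto
    finally show "norm (H (A t)) \<le> C * 2 ^ m * norm t ^ m" by (simp add: power_mult_distrib mult_ac)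
  qed (use 1 assms in auto)
qed

lemma bo_pow_diff:
  assumes "bo 2 (\<lambda>t. A t - t)"
  shows "bo (Suc n) (\<lambda>t. A t ^ n - t ^ n)"
proof (cases n)
  case 0 then show ?thesis by (simp add: bo_0)
next
  case (Suc n')
  obtain C d where 1: "0 \<le> C" "0 < d" "\<And>t. norm t < d \<Longrightarrow> norm (A t - t) \<le> C * norm t ^ 2"
    using assms by (meson boE)
  obtain d2 where 2: "0 < d2" "\<And>t. norm t < d2 \<Longrightarrow> norm (A t) \<le> 2 * norm t"
    using small_of_bo2[OF assms] by blast
  show ?thesis
  proof (rule boI[of "min d d2" _ "C * (of_nat n * 2 ^ n)"])
    fix t :: complex assume t: "norm t < min d d2"
    have At: "norm (A t) \<le> 2 * norm t" using 2 t by auto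
    have "A t ^ n - t ^ n = (A t - t) * (\<Sum>i<n. t ^ (n - Suc i) * A t ^ i)"
      by (rule power_diff_sumr2)
    moreover have "norm (\<Sum>i<n. t ^ (n - Suc i) * A t ^ i) \<le> of_nat n * 2 ^ n * norm t ^ n'"
    proof -
      have "norm (\<Sum>i<n. t ^ (n - Suc i) * A t ^ i) \<le> (\<Sum>i<n. norm (t ^ (n - Suc i) * A t ^ i))"
        by (rule norm_sum)
      also have "\<dots> \<le> (\<Sum>i<n. 2 ^ n * norm t ^ n')"
      proof (rule sum_mono)
        fix i assume i: "i \<in> {..<n}"
        have "norm (t ^ (n - Suc i) * A t ^ i) \<le> norm t ^ (n - Suc i) * (2 * norm t) ^ i"
          unfolding norm_mult norm_power by (intro mult_left_mono power_mono At) auto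
        also have "\<dots> = 2 ^ i * norm t ^ n'"
          using i Suc by (simp add: power_mult_distrib power_add[symmetric] mult_ac)
        also have "\<dots> \<le> 2 ^ n * norm t ^ n'"
          using i by (intro mult_right_mono power_increasing) auto
        finally show "norm (t ^ (n - Suc i) * A t ^ i) \<le> 2 ^ n * norm t ^ n'" .
      qed
      finally show ?thesis by simp
    qed
    ultimately have "norm (A t ^ n - t ^ n) \<le> (C * norm t ^ 2) * (of_nat n * 2 ^ n * norm t ^ n')"
    proof -
      assume e: "A t ^ n - t ^ n = (A t - t) * (\<Sum>i<n. t ^ (n - Suc i) * A t ^ i)"
        and s: "norm (\<Sum>i<n. t ^ (n - Suc i) * A t ^ i) \<le> of_nat n * 2 ^ n * norm t ^ n'"
      have a: "norm (A t - t) \<le> C * norm t ^ 2" using 1(3)[of t] t by auto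
      show ?thesis unfolding e norm_mult by (rule mult_mono[OF a s]) (use 1(1) in auto)
    qed
    then show "norm (A t ^ n - t ^ n) \<le> C * (of_nat n * 2 ^ n) * norm t ^ Suc n"
      using Suc by (simp add: power2_eq_square mult_ac)
  qed (use 1 2 in auto)
qed

lemma sum_single_top:
  assumes "\<And>i. i < j \<Longrightarrow> c i = 0"
  shows "(\<Sum>i\<le>j. c i * (t::complex) ^ i) = c j * t ^ j"
proof -
  have "(\<Sum>i\<le>j. c i * t ^ i) = (\<Sum>i<j. c i * t ^ i) + c j * t ^ j"
    by (simp add: lessThan_Suc_atMost[symmetric])
  also have "(\<Sum>i<j. c i * t ^ i) = 0" using assms by (intro sum.neutral) auto
  finally show ?thesis by simp
qed

lemma K1loc:
  assumes hol: "h holomorphic_on ball 0 R" and R: "0 < R"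
  shows "bo (Suc m) (\<lambda>t. h t - (\<Sum>j\<le>m. tay h j * t^j))"
proof -
  define r where "r = R / 2"
  have r: "0 < r" "r < R" using R by (auto simp: r_def)
  have sub: "cball 0 r \<subseteq> ball 0 R" using r by auto
  have holr: "h holomorphic_on ball 0 r" using hol by (rule holomorphic_on_subset) (use r in auto)
  have cont: "continuous_on (cball 0 r) h"
    using holomorphic_on_imp_continuous_on[OF holomorphic_on_subset[OF hol sub]] .
  obtain M where M: "0 < M" "\<And>x. x \<in> cball 0 r \<Longrightarrow> norm (h x) \<le> M"
    using compact_imp_bounded[OF compact_continuous_image[OF cont compact_cball]]
    unfolding bounded_pos by auto
  show ?thesis
  proof (rule boI[of "r/2" _ "2 * M / r ^ Suc m"])
    fix t :: complex assume t: "norm t < r / 2"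
    have "norm (h t - (\<Sum>j\<le>m. tay h j * t^j)) \<le> 2*M*(norm t / r)^(Suc m)"
      by (rule taylor_tail_bound[OF holr cont r(1)]) (use M t in auto)
    then show "norm (h t - (\<Sum>j\<le>m. tay h j * t ^ j)) \<le> 2 * M / r ^ Suc m * norm t ^ Suc m"
      by (simp add: power_divide)
  qed (use r in auto)
qed

lemma K1zero:
  assumes hol: "h holomorphic_on ball 0 R" and R: "0 < R" and z: "\<And>i. i < m \<Longrightarrow> tay h i = 0"
  shows "bo (Suc m) (\<lambda>t. h t - tay h m * t^m)"
  using K1loc[OF hol R, of m] sum_single_top[of m "tay h", OF z] by simp

lemma K2:
  assumes hol: "h holomorphic_on ball 0 R" and R: "0 < R" and b: "bo n h"
  shows "j < n \<Longrightarrow> tay h j = 0"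
proof (induction j rule: less_induct)
  case (less j)
  have 1: "bo (Suc j) (\<lambda>t. h t - tay h j * t^j)" by (rule K1zero[OF hol R]) (use less in auto)
  have 2: "bo (Suc j) h" using b less by (auto intro: bo_mono)
  have "bo (Suc j) (\<lambda>t. tay h j * t^j)" using bo_diff[OF 2 1] by simp
  then show ?case by (rule bo_zero_coeff)
qed

lemma lead:
  assumes hol: "h holomorphic_on ball 0 R" and R: "0 < R" and b: "bo (Suc m) (\<lambda>t. h t - c * t^m)"
  shows "(\<forall>j<m. tay h j = 0) \<and> tay h m = c"
proof -
  have "bo m (\<lambda>t. (h t - c * t^m) + c * t^m)"
    by (rule bo_add[OF bo_mono[OF b] bo_pow]) auto
  then have z: "\<forall>j<m. tay h j = 0" using K2[OF hol R] by auto
  have "bo (Suc m) (\<lambda>t. (h t - c * t^m) - (h t - tay h m * t^m))"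
    by (rule bo_diff[OF b K1zero[OF hol R]]) (use z in auto)
  then have "bo (Suc m) (\<lambda>t. (tay h m - c) * t^m)" by (simp add: algebra_simps)
  then show ?thesis using z bo_zero_coeff by fastforce
qed

lemma tay_comp:
  assumes hol: "h holomorphic_on ball 0 R" and R: "0 < R" and A: "bo 2 (\<lambda>t. A t - t)"
    and b: "bo (Suc m) (\<lambda>t. h (A t) - c * t^m)"
  shows "(\<forall>j<m. tay h j = 0) \<and> tay h m = c"
proof -
  obtain d where d: "0 < d" "\<And>t. norm t < d \<Longrightarrow> norm (A t) \<le> 2 * norm t"
    using small_of_bo2[OF A] by blast
  have key: "bo (Suc j) (\<lambda>t. h (A t) - tay h j * t^j)" if z: "\<And>i. i < j \<Longrightarrow> tay h i = 0" for j
  proof -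
    have 1: "bo (Suc j) (\<lambda>t. h (A t) - tay h j * A t ^ j)"
      using bo_comp[OF K1zero[OF hol R z] d] .
    have 2: "bo (Suc j) (\<lambda>t. tay h j * (A t ^ j - t ^ j))"
      by (rule bo_cmult[OF bo_pow_diff[OF A]])
    show ?thesis using bo_add[OF 1 2] by (simp add: algebra_simps)
  qed
  have z: "j < m \<Longrightarrow> tay h j = 0" for j
  proof (induction j rule: less_induct)
    case (less j)
    have 1: "bo (Suc j) (\<lambda>t. h (A t) - tay h j * t^j)" by (rule key) (use less in auto)
    have 2: "bo (Suc j) (\<lambda>t. (h (A t) - c * t^m) + c * t^m)"
      by (rule bo_add[OF bo_mono[OF b] bo_mono[OF bo_pow]]) (use less in auto)
    have "bo (Suc j) (\<lambda>t. tay h j * t^j)" using bo_diff[OF 2 1] by simp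
    then show ?case by (rule bo_zero_coeff)
  qed
  have "bo (Suc m) (\<lambda>t. (h (A t) - c * t^m) - (h (A t) - tay h m * t^m))"
    by (rule bo_diff[OF b key]) (use z in auto)
  then have "bo (Suc m) (\<lambda>t. (tay h m - c) * t^m)" by (simp add: algebra_simps)
  then show ?thesis using z bo_zero_coeff by fastforce
qed


definition bih :: "(complex \<Rightarrow> complex \<Rightarrow> complex) \<Rightarrow> real \<Rightarrow> bool" where
 "bih \<Psi> R \<longleftrightarrow> 0 < R \<and> continuous_on (cball 0 R \<times> cball 0 R) (\<lambda>(z,w). \<Psi> z w) \<and>
   (\<forall>w\<in>cball 0 R. (\<lambda>z. \<Psi> z w) holomorphic_on ball 0 R) \<and>
   (\<forall>z\<in>cball 0 R. (\<lambda>w. \<Psi> z w) holomorphic_on ball 0 R) \<and>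
   (\<forall>u. norm u \<le> 1 \<longrightarrow> (\<lambda>t. \<Psi> t (t*u)) holomorphic_on ball 0 R)"

definition gam :: "(complex \<Rightarrow> complex \<Rightarrow> complex) \<Rightarrow> complex \<Rightarrow> complex" where
  "gam \<Psi> z = deriv (\<lambda>w. \<Psi> z w) 0"

lemma bih_R: "bih \<Psi> R \<Longrightarrow> 0 < R" by (simp add: bih_def)

lemma bih_hz: "bih \<Psi> R \<Longrightarrow> norm w \<le> R \<Longrightarrow> (\<lambda>z. \<Psi> z w) holomorphic_on ball 0 R"
  by (simp add: bih_def)

lemma bih_hw: "bih \<Psi> R \<Longrightarrow> norm z \<le> R \<Longrightarrow> (\<lambda>w. \<Psi> z w) holomorphic_on ball 0 R"
  by (simp add: bih_def)

lemma bih_cont_w: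
  assumes "bih \<Psi> R" "norm z \<le> R" shows "continuous_on (cball 0 R) (\<lambda>w. \<Psi> z w)"
proof -
  have c: "continuous_on (cball 0 R \<times> cball 0 R) (\<lambda>(z,w). \<Psi> z w)" using assms by (simp add: bih_def)
  have "continuous_on (cball 0 R) ((\<lambda>(z,w). \<Psi> z w) \<circ> (\<lambda>w. (z,w)))"
    by (rule continuous_on_compose[OF continuous_on_Pair[OF continuous_on_const continuous_on_id]
          continuous_on_subset[OF c]]) (use assms in auto)
  then show ?thesis by (simp add: o_def)
qed

lemma bih_cont_z:
  assumes "bih \<Psi> R" "norm w \<le> R" shows "continuous_on (cball 0 R) (\<lambda>z. \<Psi> z w)"
proof -
  have c: "continuous_on (cball 0 R \<times> cball 0 R) (\<lambda>(z,w). \<Psi> z w)" using assms by (simp add: bih_def)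
  have "continuous_on (cball 0 R) ((\<lambda>(z,w). \<Psi> z w) \<circ> (\<lambda>z. (z,w)))"
    by (rule continuous_on_compose[OF continuous_on_Pair[OF continuous_on_id continuous_on_const]
          continuous_on_subset[OF c]]) (use assms in auto)
  then show ?thesis by (simp add: o_def)
qed

lemma bih_bound:
  assumes "bih \<Psi> R"
  obtains M where "0 < M" "\<And>z w. norm z \<le> R \<Longrightarrow> norm w \<le> R \<Longrightarrow> norm (\<Psi> z w) \<le> M"
proof -
  have c: "continuous_on (cball 0 R \<times> cball 0 R) (\<lambda>(z,w). \<Psi> z w)" using assms by (simp add: bih_def)
  have "compact ((\<lambda>(z,w). \<Psi> z w) ` (cball 0 R \<times> cball 0 R))"
    by (rule compact_continuous_image[OF c compact_Times[OF compact_cball compact_cball]])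
  then obtain M where "0 < M" "\<forall>x\<in>(\<lambda>(z,w). \<Psi> z w) ` (cball 0 R \<times> cball 0 R). norm x \<le> M"
    using compact_imp_bounded bounded_pos by metis
  then show ?thesis using that by auto
qed

lemma bih_T1:
  assumes b: "bih \<Psi> R"
  obtains K L where "0 \<le> K" "0 \<le> L"
    "\<And>z w. norm z \<le> R \<Longrightarrow> norm w \<le> R/2 \<Longrightarrow> norm (\<Psi> z w - \<Psi> z 0) \<le> L * norm w"
    "\<And>z w. norm z \<le> R \<Longrightarrow> norm w \<le> R/2 \<Longrightarrow> norm (\<Psi> z w - \<Psi> z 0 - w * gam \<Psi> z) \<le> K * norm w ^ 2"
proof -
  obtain M where M: "0 < M" "\<And>z w. norm z \<le> R \<Longrightarrow> norm w \<le> R \<Longrightarrow> norm (\<Psi> z w) \<le> M"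
    using bih_bound[OF b] by blast
  have R: "0 < R" using b by (simp add: bih_def)
  show ?thesis
  proof (rule that[of "2*M/R^2" "2*M/R"])
    fix z w :: complex assume z: "norm z \<le> R" and w: "norm w \<le> R/2"
    have t: "norm ((\<lambda>w. \<Psi> z w) w - (\<Sum>j\<le>m. tay (\<lambda>w. \<Psi> z w) j * w^j)) \<le> 2*M*(norm w / R)^(Suc m)" for m
      by (rule taylor_tail_bound[OF bih_hw[OF b z] bih_cont_w[OF b z] R _ w]) (use M z in auto)
    show "norm (\<Psi> z w - \<Psi> z 0) \<le> 2*M/R * norm w"
      using t[of 0] by (simp add: tay_def)
    show "norm (\<Psi> z w - \<Psi> z 0 - w * gam \<Psi> z) \<le> 2*M/R^2 * norm w ^ 2"
      using t[of 1] by (simp add: tay_def gam_def power_divide algebra_simps power2_eq_square)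
  qed (use M R in auto)
qed

lemma bih_T2:
  assumes b: "bih \<Psi> R"
  shows "gam \<Psi> holomorphic_on ball 0 R" "continuous_on (cball 0 R) (gam \<Psi>)"
proof -
  obtain K L where KL: "0 \<le> K" "0 \<le> L"
    "\<And>z w. norm z \<le> R \<Longrightarrow> norm w \<le> R/2 \<Longrightarrow> norm (\<Psi> z w - \<Psi> z 0) \<le> L * norm w"
    "\<And>z w. norm z \<le> R \<Longrightarrow> norm w \<le> R/2 \<Longrightarrow> norm (\<Psi> z w - \<Psi> z 0 - w * gam \<Psi> z) \<le> K * norm w ^ 2"
    by (rule bih_T1[OF b]) blast
  have R: "0 < R" using b by (simp add: bih_def)
  define f where "f = (\<lambda>h z. (\<Psi> z h - \<Psi> z 0) / h)"
  have ev: "eventually (\<lambda>h. continuous_on (cball 0 R) (f h) \<and> (f h) holomorphic_on ball 0 R) (at 0)"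
    unfolding eventually_at
  proof (rule exI[of _ R], rule conjI[OF R], intro ballI impI)
    fix h :: complex assume hU: "h \<in> UNIV" and h: "h \<noteq> 0 \<and> dist h 0 < R"
    then have hR: "norm h \<le> R" by simp
    have c0: "norm (0::complex) \<le> R" using R by simp
    have h0: "h \<noteq> 0" using h by simp
    show "continuous_on (cball 0 R) (f h) \<and> f h holomorphic_on ball 0 R"
      unfolding f_def
      by (intro conjI continuous_intros holomorphic_intros bih_cont_z[OF b hR] bih_cont_z[OF b c0]
            bih_hz[OF b hR] bih_hz[OF b c0]) (simp_all add: h0)
  qed
  have ul: "uniform_limit (cball 0 R) f (gam \<Psi>) (at 0)"
  proof (rule uniform_limitI)
    fix e :: real assume e: "0 < e"
    show "\<forall>\<^sub>F h in at 0. \<forall>z\<in>cball 0 R. dist (f h z) (gam \<Psi> z) < e"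
      unfolding eventually_at
    proof (rule exI[of _ "min (R/2) (e/(K+1))"], intro conjI allI impI ballI)
      show "0 < min (R/2) (e/(K+1))" using R e KL by auto
      fix h z :: complex assume hU: "h \<in> UNIV" and h: "h \<noteq> 0 \<and> dist h 0 < min (R/2) (e/(K+1))"
        and z: "z \<in> cball 0 R"
      have hn: "norm h \<le> R/2" using h by simp
      have "f h z - gam \<Psi> z = (\<Psi> z h - \<Psi> z 0 - h * gam \<Psi> z) / h"
        using h by (simp add: f_def field_simps)
      then have "dist (f h z) (gam \<Psi> z) = norm (\<Psi> z h - \<Psi> z 0 - h * gam \<Psi> z) / norm h"
        by (simp add: dist_norm norm_divide)
      also have "\<dots> \<le> K * norm h ^ 2 / norm h"
        using KL(4)[of z h] z hn h by (intro divide_right_mono) auto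
      also have "\<dots> = K * norm h" using h by (simp add: power2_eq_square)
      also have "\<dots> \<le> (K + 1) * norm h" by (simp add: mult_right_mono)
      also have "\<dots> < (K + 1) * (e / (K + 1))"
        using h KL by (intro mult_strict_left_mono) auto
      also have "\<dots> = e" using KL by simp
      finally show "dist (f h z) (gam \<Psi> z) < e" .
    qed
  qed
  obtain "continuous_on (cball 0 R) (gam \<Psi>)" "gam \<Psi> holomorphic_on ball 0 R"
    using holomorphic_uniform_limit[OF ev ul] by auto
  then show "gam \<Psi> holomorphic_on ball 0 R" "continuous_on (cball 0 R) (gam \<Psi>)" by auto
qed

lemma ball_sub: "norm x + r \<le> R \<Longrightarrow> ball x r \<subseteq> ball (0::complex) R"
proof
  fix y assume a: "norm x + r \<le> R" and y: "y \<in> ball x r"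
  have "norm y \<le> norm x + norm (x - y)" using norm_triangle_ineq4[of x "x - y"] by simp
  then show "y \<in> ball 0 R" using a y by (simp add: dist_norm)
qed

lemma cball_sub: "norm x + r \<le> R \<Longrightarrow> cball x r \<subseteq> cball (0::complex) R"
proof
  fix y assume a: "norm x + r \<le> R" and y: "y \<in> cball x r"
  have "norm y \<le> norm x + norm (x - y)" using norm_triangle_ineq4[of x "x - y"] by simp
  then show "y \<in> cball 0 R" using a y by (simp add: dist_norm)
qed

lemma bih_T3:
  assumes b: "bih \<Psi> R"
  obtains K3 where "0 \<le> K3"
    "\<And>z w. norm z \<le> R \<Longrightarrow> norm w \<le> R/4 \<Longrightarrow> norm (deriv (\<lambda>w. \<Psi> z w) w - gam \<Psi> z) \<le> K3 * norm w"
proof -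
  obtain M where M: "0 < M" "\<And>z w. norm z \<le> R \<Longrightarrow> norm w \<le> R \<Longrightarrow> norm (\<Psi> z w) \<le> M"
    using bih_bound[OF b] by blast
  have R: "0 < R" using b by (simp add: bih_def)
  show ?thesis
  proof (rule that[of "2*(2*M/R)/(R/2)"])
    fix z w :: complex assume z: "norm z \<le> R" and w: "norm w \<le> R/4"
    define \<phi> where "\<phi> = (\<lambda>w. \<Psi> z w)"
    have hol: "\<phi> holomorphic_on ball 0 R" unfolding \<phi>_def by (rule bih_hw[OF b z])
    have cont: "continuous_on (cball 0 R) \<phi>" unfolding \<phi>_def by (rule bih_cont_w[OF b z])
    have db: "norm (deriv \<phi> x) \<le> 2*M/R" if x: "norm x = R/2" for x
    proof -
      have "norm ((deriv ^^ 1) \<phi> x) \<le> fact 1 * M / (R/2)^1"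
      proof (rule Cauchy_inequality)
        show "\<phi> holomorphic_on ball x (R/2)"
          by (rule holomorphic_on_subset[OF hol ball_sub]) (use x in auto)
        show "continuous_on (cball x (R/2)) \<phi>"
          by (rule continuous_on_subset[OF cont cball_sub]) (use x in auto)
        fix y assume "norm (x - y) = R/2"
        then have "norm y \<le> R" using x norm_triangle_sub[of y x] by (simp add: norm_minus_commute)
        then show "norm (\<phi> y) \<le> M" unfolding \<phi>_def using M z by auto
      qed (use R in auto)
      then show ?thesis by (simp add: mult.commute)
    qed
    have hold: "deriv \<phi> holomorphic_on ball 0 (R/2)"
      by (rule holomorphic_on_subset[OF holomorphic_deriv[OF hol open_ball]]) (use R in auto)
    have contd: "continuous_on (cball 0 (R/2)) (deriv \<phi>)"
      by (rule holomorphic_on_imp_continuous_on, rule holomorphic_on_subset[OF holomorphic_deriv[OF hol open_ball]])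
         (use R in auto)
    have "norm (deriv \<phi> w - (\<Sum>j\<le>0. tay (deriv \<phi>) j * w^j)) \<le> 2*(2*M/R)*(norm w / (R/2))^(Suc 0)"
      by (rule taylor_tail_bound[OF hold contd]) (use R w db in auto)
    then show "norm (deriv (\<lambda>w. \<Psi> z w) w - gam \<Psi> z) \<le> 2*(2*M/R)/(R/2) * norm w"
      by (simp add: tay_def gam_def \<phi>_def)
  qed (use M R in auto)
qed

lemma bih_T4:
  assumes b: "bih \<Psi> R"
  obtains K4 where "0 \<le> K4"
    "\<And>z w. norm z \<le> R/2 \<Longrightarrow> norm w \<le> R/2 \<Longrightarrow>
       norm (deriv (\<lambda>z. \<Psi> z w) z - deriv (\<lambda>z. \<Psi> z 0) z) \<le> K4 * norm w"
proof -
  obtain K L where KL: "0 \<le> K" "0 \<le> L"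
    "\<And>z w. norm z \<le> R \<Longrightarrow> norm w \<le> R/2 \<Longrightarrow> norm (\<Psi> z w - \<Psi> z 0) \<le> L * norm w"
    "\<And>z w. norm z \<le> R \<Longrightarrow> norm w \<le> R/2 \<Longrightarrow> norm (\<Psi> z w - \<Psi> z 0 - w * gam \<Psi> z) \<le> K * norm w ^ 2"
    by (rule bih_T1[OF b]) blast
  have R: "0 < R" using b by (simp add: bih_def)
  show ?thesis
  proof (rule that[of "L/(R/2)"])
    fix z w :: complex assume z: "norm z \<le> R/2" and w: "norm w \<le> R/2"
    have wR: "norm w \<le> R" and zR: "norm (0::complex) \<le> R" using w R by auto
    define \<kappa> where "\<kappa> = (\<lambda>\<zeta>. \<Psi> \<zeta> w - \<Psi> \<zeta> 0)"
    have hol: "\<kappa> holomorphic_on ball 0 R" unfolding \<kappa>_def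
      by (intro holomorphic_intros bih_hz[OF b wR] bih_hz[OF b zR])
    have cont: "continuous_on (cball 0 R) \<kappa>" unfolding \<kappa>_def
      by (intro continuous_intros bih_cont_z[OF b wR] bih_cont_z[OF b zR])
    have "norm ((deriv ^^ 1) \<kappa> z) \<le> fact 1 * (L * norm w) / (R/2)^1"
    proof (rule Cauchy_inequality)
      show "\<kappa> holomorphic_on ball z (R/2)"
        by (rule holomorphic_on_subset[OF hol ball_sub]) (use z in auto)
      show "continuous_on (cball z (R/2)) \<kappa>"
        by (rule continuous_on_subset[OF cont cball_sub]) (use z in auto)
      fix y assume "norm (z - y) = R/2"
      then have "norm y \<le> R" using z norm_triangle_sub[of y z] by (simp add: norm_minus_commute)
      then show "norm (\<kappa> y) \<le> L * norm w" unfolding \<kappa>_def using KL(3) w by auto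
    qed (use R in auto)
    moreover have "deriv \<kappa> z = deriv (\<lambda>z. \<Psi> z w) z - deriv (\<lambda>z. \<Psi> z 0) z"
    proof -
      have zb: "z \<in> ball 0 R" using z R by auto
      show ?thesis unfolding \<kappa>_def
        by (rule deriv_diff; rule holomorphic_on_imp_differentiable_at[OF _ open_ball zb])
           (auto intro: bih_hz[OF b wR] bih_hz[OF b zR])
    qed
    ultimately show "norm (deriv (\<lambda>z. \<Psi> z w) z - deriv (\<lambda>z. \<Psi> z 0) z) \<le> L/(R/2) * norm w"
      by (simp add: mult_ac)
  qed (use KL R in auto)
qed

lemma bih_T5:
  assumes b: "bih \<Psi> R" and j: "1 \<le> j"
  shows "((\<lambda>u. tay (\<lambda>t. \<Psi> t (t*u)) j) has_field_derivative tay (gam \<Psi>) (j - 1)) (at 0)"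
proof -
  obtain K L where KL: "0 \<le> K" "0 \<le> L"
    "\<And>z w. norm z \<le> R \<Longrightarrow> norm w \<le> R/2 \<Longrightarrow> norm (\<Psi> z w - \<Psi> z 0) \<le> L * norm w"
    "\<And>z w. norm z \<le> R \<Longrightarrow> norm w \<le> R/2 \<Longrightarrow> norm (\<Psi> z w - \<Psi> z 0 - w * gam \<Psi> z) \<le> K * norm w ^ 2"
    by (rule bih_T1[OF b]) blast
  have R: "0 < R" using b by (simp add: bih_def)
  define \<rho> where "\<rho> = R/2"
  have \<rho>: "0 < \<rho>" "\<rho> < R" using R by (auto simp: \<rho>_def)
  define \<gamma> where "\<gamma> = gam \<Psi>"
  define F where "F = (\<lambda>u. tay (\<lambda>t. \<Psi> t (t*u)) j)"
  have Ic: "((\<lambda>t. \<Psi> t (t*u) / (t - 0)^(Suc j)) has_contour_integral (2*pi*\<i> * F u)) (circlepath 0 \<rho>)"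
    if u: "norm u \<le> 1" for u
  proof -
    have hol: "(\<lambda>t. \<Psi> t (t*u)) holomorphic_on ball 0 R" using b u by (simp add: bih_def)
    have "((\<lambda>t. \<Psi> t (t*u) / (t - 0)^(Suc j)) has_contour_integral
            ((2*pi*\<i>) / (fact j) * (deriv ^^ j) (\<lambda>t. \<Psi> t (t*u)) 0)) (circlepath 0 \<rho>)"
    proof (rule Cauchy_has_contour_integral_higher_derivative_circlepath)
      show "continuous_on (cball 0 \<rho>) (\<lambda>t. \<Psi> t (t * u))"
        by (rule holomorphic_on_imp_continuous_on, rule holomorphic_on_subset[OF hol]) (use \<rho> in auto)
      show "(\<lambda>t. \<Psi> t (t * u)) holomorphic_on ball 0 \<rho>"
        by (rule holomorphic_on_subset[OF hol]) (use \<rho> in auto)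
    qed (use \<rho> in auto)
    then show ?thesis by (simp add: F_def tay_def)
  qed
  have Gc: "((\<lambda>t. \<gamma> t / (t - 0)^(Suc (j - 1))) has_contour_integral (2*pi*\<i> * tay \<gamma> (j - 1))) (circlepath 0 \<rho>)"
  proof -
    have "((\<lambda>t. \<gamma> t / (t - 0)^(Suc (j - 1))) has_contour_integral
            ((2*pi*\<i>) / (fact (j - 1)) * (deriv ^^ (j - 1)) \<gamma> 0)) (circlepath 0 \<rho>)"
    proof (rule Cauchy_has_contour_integral_higher_derivative_circlepath)
      show "continuous_on (cball 0 \<rho>) \<gamma>"
        by (rule continuous_on_subset[OF bih_T2(2)[OF b, folded \<gamma>_def]]) (use \<rho> in auto)
      show "\<gamma> holomorphic_on ball 0 \<rho>"
        by (rule holomorphic_on_subset[OF bih_T2(1)[OF b, folded \<gamma>_def]]) (use \<rho> in auto)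
    qed (use \<rho> in auto)
    then show ?thesis by (simp add: tay_def)
  qed
  define C where "C = K * \<rho>^3 / \<rho>^(Suc j)"
  have C0: "0 \<le> C" using KL \<rho> by (simp add: C_def)
  have main: "norm ((F u - F 0) / u - tay \<gamma> (j - 1)) \<le> C * norm u"
    if u0: "u \<noteq> 0" and u1: "norm u \<le> 1" for u
  proof -
    have z1: "norm (0::complex) \<le> 1" by simp
    have I: "((\<lambda>t. (\<Psi> t (t*u) / (t - 0)^(Suc j) - \<Psi> t (t*0) / (t - 0)^(Suc j)) / u
                  - \<gamma> t / (t - 0)^(Suc (j - 1))) has_contour_integral
              ((2*pi*\<i> * F u - 2*pi*\<i> * F 0) / u - 2*pi*\<i> * tay \<gamma> (j - 1))) (circlepath 0 \<rho>)"
      by (intro has_contour_integral_diff has_contour_integral_div Ic u1 z1 Gc)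
    have bd: "norm ((\<Psi> t (t*u) / (t - 0)^(Suc j) - \<Psi> t (t*0) / (t - 0)^(Suc j)) / u
                  - \<gamma> t / (t - 0)^(Suc (j - 1))) \<le> K * \<rho>^2 * norm u / \<rho>^(Suc j)"
      if t: "norm (t - 0) = \<rho>" for t
    proof -
      have t0: "t \<noteq> 0" using t \<rho> by auto
      have sj: "Suc (j - 1) = j" using j by simp
      have eq: "(\<Psi> t (t*u) / (t - 0)^(Suc j) - \<Psi> t (t*0) / (t - 0)^(Suc j)) / u
                  - \<gamma> t / (t - 0)^(Suc (j - 1))
              = (\<Psi> t (t*u) - \<Psi> t 0 - (t*u) * \<gamma> t) / (u * t^(Suc j))"
        using t0 u0 unfolding sj by (simp add: field_simps)
      have "norm t * norm u \<le> norm t" using u1 by (simp add: mult_left_le)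
      then have tu: "norm (t*u) \<le> R/2" using t \<rho> unfolding norm_mult \<rho>_def by simp
      have tR: "norm t \<le> R" using t \<rho> by simp
      have "norm (\<Psi> t (t*u) - \<Psi> t 0 - (t*u) * \<gamma> t) \<le> K * norm (t*u)^2"
        using KL(4)[OF tR tu] by (simp add: \<gamma>_def)
      also have "\<dots> = K * \<rho>^2 * norm u^2" using t by (simp add: norm_mult power_mult_distrib)
      finally have n: "norm (\<Psi> t (t*u) - \<Psi> t 0 - (t*u) * \<gamma> t) \<le> K * \<rho>^2 * norm u^2" .
      have tt: "norm t = \<rho>" using t by simp
      have "norm ((\<Psi> t (t*u) - \<Psi> t 0 - (t*u) * \<gamma> t) / (u * t^(Suc j)))
           = norm (\<Psi> t (t*u) - \<Psi> t 0 - (t*u) * \<gamma> t) / (norm u * \<rho>^(Suc j))"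
        by (simp add: norm_divide norm_mult norm_power tt)
      also have "\<dots> \<le> K * \<rho>^2 * norm u^2 / (norm u * \<rho>^(Suc j))"
        by (rule divide_right_mono[OF n]) (use \<rho> in simp)
      also have "\<dots> = K * \<rho>^2 * norm u / \<rho>^(Suc j)" using u0 by (simp add: power2_eq_square)
      finally show ?thesis unfolding eq .
    qed
    have "norm ((2*pi*\<i> * F u - 2*pi*\<i> * F 0) / u - 2*pi*\<i> * tay \<gamma> (j - 1))
          \<le> K * \<rho>^2 * norm u / \<rho>^(Suc j) * (2 * pi * \<rho>)"
      by (rule has_contour_integral_bound_circlepath[OF I _ \<rho>(1)]) (use KL \<rho> bd in auto)
    moreover have "(2*pi*\<i> * F u - 2*pi*\<i> * F 0) / u - 2*pi*\<i> * tay \<gamma> (j - 1)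
       = (2*pi*\<i>) * ((F u - F 0) / u - tay \<gamma> (j - 1))" by (simp add: field_simps)
    ultimately have "2 * pi * norm ((F u - F 0) / u - tay \<gamma> (j - 1))
          \<le> K * \<rho>^2 * norm u / \<rho>^(Suc j) * (2 * pi * \<rho>)"
      by (simp add: norm_mult)
    then have "(2 * pi) * norm ((F u - F 0) / u - tay \<gamma> (j - 1))
          \<le> (2 * pi) * (K * \<rho>^2 * norm u / \<rho>^(Suc j) * \<rho>)"
    proof -
      assume a: "2 * pi * norm ((F u - F 0) / u - tay \<gamma> (j - 1))
          \<le> K * \<rho>^2 * norm u / \<rho>^(Suc j) * (2 * pi * \<rho>)"
      have "K * \<rho>^2 * norm u / \<rho>^(Suc j) * (2 * pi * \<rho>) = (2 * pi) * (K * \<rho>^2 * norm u / \<rho>^(Suc j) * \<rho>)"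
        by (simp only: mult_ac times_divide_eq_left)
      then show ?thesis using a by linarith
    qed
    then have "norm ((F u - F 0) / u - tay \<gamma> (j - 1)) \<le> K * \<rho>^2 * norm u / \<rho>^(Suc j) * \<rho>"
      by (rule mult_left_le_imp_le) simp
    also have "\<dots> = C * norm u" by (simp add: C_def power3_eq_cube power2_eq_square field_simps)
    finally show ?thesis .
  qed
  have "(\<lambda>h. (F (0 + h) - F 0) / h) \<midarrow>0\<rightarrow> tay \<gamma> (j - 1)"
    unfolding LIM_eq
  proof (intro allI impI)
    fix r :: real assume r: "0 < r"
    show "\<exists>s>0. \<forall>x. x \<noteq> 0 \<and> norm (x - 0) < s \<longrightarrow> norm ((F (0 + x) - F 0) / x - tay \<gamma> (j - 1)) < r"
    proof (rule exI[of _ "min 1 (r / (C + 1))"], intro conjI allI impI)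
      show "0 < min 1 (r / (C + 1))" using r C0 by auto
      fix x :: complex assume x: "x \<noteq> 0 \<and> norm (x - 0) < min 1 (r / (C + 1))"
      have "norm ((F x - F 0) / x - tay \<gamma> (j - 1)) \<le> C * norm x" using main[of x] x by auto
      also have "\<dots> \<le> (C + 1) * norm x" by (simp add: mult_right_mono)
      also have "\<dots> < (C + 1) * (r / (C + 1))" using x C0 by (intro mult_strict_left_mono) auto
      also have "\<dots> = r" using C0 by simp
      finally show "norm ((F (0 + x) - F 0) / x - tay \<gamma> (j - 1)) < r" by simp
    qed
  qed
  then show ?thesis unfolding DERIV_def F_def \<gamma>_def .
qed


lemma cmul_simps [simp]:
  "fst (cmul c x) = c * fst x" "snd (cmul c x) = c * snd x"
  "cmul 0 x = 0" "cmul 1 x = x" "cmul c 0 = 0"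
  by (auto simp: cmul_def zero_prod_def)

lemma cmul_cmul [simp]: "cmul a (cmul b x) = cmul (a*b) x"
  by (simp add: cmul_def mult_ac)

lemma cmul_add_left: "cmul a x + cmul b x = cmul (a+b) x"
  by (simp add: cmul_def algebra_simps)

lemma cmul_add_right: "cmul c (x + y) = cmul c x + cmul c y"
  by (simp add: cmul_def algebra_simps)

lemma norm_cmul: "norm (cmul c x) = norm c * norm x"
proof -
  have "norm (cmul c x) = sqrt ((norm c)^2 * ((norm (fst x))^2 + (norm (snd x))^2))"
    by (simp add: cmul_def norm_Pair norm_mult power_mult_distrib algebra_simps)
  also have "\<dots> = norm c * norm x"
    by (simp add: real_sqrt_mult norm_Pair[of "fst x" "snd x", simplified])
  finally show ?thesis .
qed

definition lf :: "complex \<Rightarrow> complex \<Rightarrow> c2 \<Rightarrow> complex" where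
  "lf c1 c2 y = c1 * fst y + c2 * snd y"

lemma lf_add: "lf c1 c2 (x + y) = lf c1 c2 x + lf c1 c2 y"
  and lf_diff: "lf c1 c2 (x - y) = lf c1 c2 x - lf c1 c2 y"
  and lf_cmul: "lf c1 c2 (cmul c x) = c * lf c1 c2 x"
  and lf_zero: "lf c1 c2 0 = 0"
  by (auto simp: lf_def algebra_simps)

definition Dh :: "(c2 \<Rightarrow> c2) \<Rightarrow> c2 \<Rightarrow> c2 \<Rightarrow> c2" where
  "Dh h y = (SOME L. (h has_derivative L) (at y) \<and> (\<forall>c x. L (cmul c x) = cmul c (L x)))"

lemma Dh:
  assumes "holo2_on U h" "y \<in> U"
  shows "(h has_derivative Dh h y) (at y)" "\<And>c x. Dh h y (cmul c x) = cmul c (Dh h y x)"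
proof -
  have "\<exists>L. (h has_derivative L) (at y) \<and> (\<forall>c x. L (cmul c x) = cmul c (L x))"
    using assms by (simp add: holo2_on_def)
  then have "(h has_derivative Dh h y) (at y) \<and> (\<forall>c x. Dh h y (cmul c x) = cmul c (Dh h y x))"
    unfolding Dh_def by (rule someI_ex)
  then show "(h has_derivative Dh h y) (at y)" "\<And>c x. Dh h y (cmul c x) = cmul c (Dh h y x)" by auto
qed

lemma line_path_deriv: "((\<lambda>t. a + cmul t x) has_derivative (\<lambda>s. cmul s x)) (at t0)"
  unfolding cmul_def by (auto intro!: derivative_eq_intros)

lemma line_has_deriv:
  assumes hd: "(h has_derivative L) (at (a + cmul t0 x))" and lin: "\<And>c y. L (cmul c y) = cmul c (L y)"
  shows "((\<lambda>t. lf c1 c2 (h (a + cmul t x) - q)) has_field_derivative lf c1 c2 (L x)) (at t0)"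
proof -
  have H: "((\<lambda>t. h (a + cmul t x)) has_derivative (\<lambda>s. L (cmul s x))) (at t0)"
    using has_derivative_compose[OF line_path_deriv hd] by simp
  then have H': "((\<lambda>t. h (a + cmul t x)) has_derivative (\<lambda>s. cmul s (L x))) (at t0)"
    by (simp add: lin)
  have "((\<lambda>t. c1 * fst (h (a + cmul t x) - q) + c2 * snd (h (a + cmul t x) - q)) has_derivative
          (\<lambda>s. c1 * fst (cmul s (L x) - 0) + c2 * snd (cmul s (L x) - 0))) (at t0)"
    by (intro has_derivative_add has_derivative_mult_right has_derivative_fst has_derivative_snd
          has_derivative_diff H' has_derivative_const)
  moreover have "(\<lambda>s. c1 * fst (cmul s (L x) - 0) + c2 * snd (cmul s (L x) - 0)) = (\<lambda>s. lf c1 c2 (L x) * s)"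
    by (auto simp: lf_def algebra_simps)
  ultimately show ?thesis unfolding has_field_derivative_def lf_def by simp
qed

lemma line_holo:
  assumes h: "holo2_on U h" and S: "\<And>t. t \<in> S \<Longrightarrow> a + cmul t x \<in> U"
  shows "(\<lambda>t. lf c1 c2 (h (a + cmul t x) - q)) holomorphic_on S"
  unfolding holomorphic_on_def
proof
  fix t assume t: "t \<in> S"
  show "(\<lambda>t. lf c1 c2 (h (a + cmul t x) - q)) field_differentiable at t within S"
    using line_has_deriv[OF Dh(1)[OF h S[OF t]] Dh(2)[OF h S[OF t]]]
    by (meson field_differentiable_at_within field_differentiable_def)
qed

lemma line_holo_fst:
  assumes h: "holo2_on U h" and S: "\<And>t. t \<in> S \<Longrightarrow> a + cmul t x \<in> U"
  shows "(\<lambda>t. fst (h (a + cmul t x) - q)) holomorphic_on S" "(\<lambda>t. snd (h (a + cmul t x) - q)) holomorphic_on S"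
proof -
  have "(\<lambda>t. lf 1 0 (h (a + cmul t x) - q)) holomorphic_on S" by (rule line_holo[OF h S])
  then show "(\<lambda>t. fst (h (a + cmul t x) - q)) holomorphic_on S" by (simp add: lf_def)
  have "(\<lambda>t. lf 0 1 (h (a + cmul t x) - q)) holomorphic_on S" by (rule line_holo[OF h S])
  then show "(\<lambda>t. snd (h (a + cmul t x) - q)) holomorphic_on S" by (simp add: lf_def)
qed

lemma holo_cont: "holo2_on U h \<Longrightarrow> continuous_on U h"
  by (meson Dh(1) continuous_at_imp_continuous_on has_derivative_continuous)

lemma line_ball:
  assumes "open U" "p \<in> U"
  obtains r where "0 < r" "\<And>t. t \<in> ball 0 r \<Longrightarrow> p + cmul t x \<in> U"
proof -
  obtain e where e: "0 < e" "ball p e \<subseteq> U" using assms open_contains_ball by blast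
  show ?thesis
  proof (rule that[of "e / (norm x + 1)"])
    fix t :: complex assume t: "t \<in> ball 0 (e / (norm x + 1))"
    have "norm (cmul t x) = norm t * norm x" by (rule norm_cmul)
    also have "\<dots> \<le> norm t * (norm x + 1)" by (simp add: mult_left_mono)
    also have "\<dots> < e"
    proof -
      have nx: "0 < norm x + 1" by (simp add: add_nonneg_pos)
      show ?thesis using t pos_less_divide_eq[OF nx, of "norm t" e] by simp
    qed
    finally show "p + cmul t x \<in> U" using e by (auto simp: dist_norm)
  qed (use e in \<open>auto intro!: divide_pos_pos add_nonneg_pos\<close>)
qed

lemma tay_lf:
  assumes h: "holo2_on U h" and U: "open U" "p \<in> U"
  shows "lf c1 c2 (hpart h p j x) = tay (\<lambda>t. lf c1 c2 (h (p + cmul t x) - p)) j"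
proof -
  obtain r where r: "0 < r" "\<And>t. t \<in> ball 0 r \<Longrightarrow> p + cmul t x \<in> U"
    using line_ball[OF U] by blast
  have hf1: "(\<lambda>t. fst (h (p + cmul t x) - p)) holomorphic_on ball 0 r"
    by (rule line_holo_fst(1)[OF h]) (use r(2) in auto)
  have hf2: "(\<lambda>t. snd (h (p + cmul t x) - p)) holomorphic_on ball 0 r"
    by (rule line_holo_fst(2)[OF h]) (use r(2) in auto)
  have "(deriv ^^ j) (\<lambda>t. c1 * fst (h (p + cmul t x) - p) + c2 * snd (h (p + cmul t x) - p)) 0
      = (deriv ^^ j) (\<lambda>t. c1 * fst (h (p + cmul t x) - p)) 0 + (deriv ^^ j) (\<lambda>t. c2 * snd (h (p + cmul t x) - p)) 0"
    by (rule higher_deriv_add[OF holomorphic_on_mult[OF holomorphic_on_const hf1]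
          holomorphic_on_mult[OF holomorphic_on_const hf2] open_ball]) (use r in auto)
  also have "\<dots> = c1 * (deriv ^^ j) (\<lambda>t. fst (h (p + cmul t x) - p)) 0 + c2 * (deriv ^^ j) (\<lambda>t. snd (h (p + cmul t x) - p)) 0"
    using higher_deriv_cmult[OF hf1 _ open_ball] higher_deriv_cmult[OF hf2 _ open_ball] r by simp
  finally show ?thesis unfolding lf_def tay_def hpart_def by (simp add: add_divide_distrib)
qed


lemma hpart0: "h p = p \<Longrightarrow> hpart h p 0 x = 0"
  by (simp add: hpart_def prod_eq_iff)

lemma hpart1:
  assumes h: "holo2_on U h" "open U" "p \<in> U" and hd: "(h has_derivative (\<lambda>x. x)) (at p)"
  shows "hpart h p 1 x = x"
proof -
  have "((\<lambda>t. lf c1 c2 (h (p + cmul t x) - p)) has_field_derivative lf c1 c2 x) (at 0)" for c1 c2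
    using line_has_deriv[of h "\<lambda>x. x" p 0 x c1 c2 p] hd by simp
  from DERIV_imp_deriv[OF this]
  have "deriv (\<lambda>t. lf c1 c2 (h (p + cmul t x) - p)) 0 = lf c1 c2 x" for c1 c2 .
  from this[of 1 0] this[of 0 1] show ?thesis
    by (simp add: hpart_def lf_def prod_eq_iff)
qed

lemma tay_minus_lin:
  assumes "F holomorphic_on ball 0 r" "0 < r"
  shows "tay (\<lambda>t. F t - c * t) j = tay F j - (if j = 1 then c else 0)"
proof -
  have "(deriv ^^ j) (\<lambda>t. F t - c * t) 0 = (deriv ^^ j) F 0 - (deriv ^^ j) (\<lambda>t. c * t) 0"
    by (rule higher_deriv_diff) (use assms in \<open>auto intro!: holomorphic_intros\<close>)
  then show ?thesis by (auto simp: tay_def)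
qed

lemma lf_norm: "norm (lf c1 c2 y) \<le> (norm c1 + norm c2) * norm y"
proof -
  have "norm (lf c1 c2 y) \<le> norm c1 * norm (fst y) + norm c2 * norm (snd y)"
    unfolding lf_def by (metis norm_mult norm_triangle_ineq)
  also have "\<dots> \<le> norm c1 * norm y + norm c2 * norm y"
    using norm_fst_le[of "fst y" "snd y"] norm_snd_le[of "snd y" "fst y"]
    by (intro add_mono mult_left_mono) auto
  finally show ?thesis by (simp add: distrib_right)
qed

lemma jet_bound_comp:
  assumes h: "holo2_on U h" and U: "open U" "p \<in> U" and hp: "h p = p"
    and hd: "(h has_derivative (\<lambda>x. x)) (at p)"
    and z: "\<And>j. 2 \<le> j \<Longrightarrow> j \<le> m \<Longrightarrow> hpart h p j = (\<lambda>x. 0)"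
  shows "\<exists>C \<delta>. 0 < \<delta> \<and> (\<forall>x. norm x < \<delta> \<longrightarrow> norm (lf ca cb (h (p + x) - p - x)) \<le> C * norm x ^ Suc m)"
proof -
  obtain \<epsilon> where \<epsilon>: "0 < \<epsilon>" "ball p \<epsilon> \<subseteq> U" using U open_contains_ball by blast
  define \<delta> where "\<delta> = \<epsilon> / 4"
  have \<delta>: "0 < \<delta>" using \<epsilon> by (simp add: \<delta>_def)
  have cU: "cball p (2*\<delta>) \<subseteq> U" using \<epsilon> by (auto simp: \<delta>_def)
  have cont: "continuous_on (cball p (2*\<delta>)) h" by (rule continuous_on_subset[OF holo_cont[OF h] cU])
  obtain M where M: "0 < M" "\<And>y. y \<in> cball p (2*\<delta>) \<Longrightarrow> norm (lf ca cb (h y - p)) \<le> M"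
  proof -
    have "compact ((\<lambda>y. lf ca cb (h y - p)) ` cball p (2*\<delta>))"
      by (rule compact_continuous_image) (auto simp: lf_def intro!: continuous_intros cont)
    then obtain B where B: "0 < B" "\<forall>z\<in>(\<lambda>y. lf ca cb (h y - p)) ` cball p (2*\<delta>). norm z \<le> B"
      using compact_imp_bounded bounded_pos by blast
    show ?thesis by (rule that[of B]) (use B in auto)
  qed
  define M' where "M' = M + 2 * ((norm ca + norm cb) * \<delta>)"
  have M'0: "0 \<le> M'" using M \<delta> by (simp add: M'_def)
  show ?thesis
  proof (rule exI[of _ "2 * M' / \<delta> ^ Suc m"], rule exI[of _ \<delta>], intro conjI allI impI \<delta>)
    fix x :: c2 assume x: "norm x < \<delta>"
    show "norm (lf ca cb (h (p + x) - p - x)) \<le> 2 * M' / \<delta> ^ Suc m * norm x ^ Suc m"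
    proof (cases "x = 0")
      case True then show ?thesis using hp by (simp add: lf_def)
    next
      case False
      then have nx: "0 < norm x" by simp
      define \<xi> where "\<xi> = cmul (of_real (\<delta> / norm x)) x"
      have n\<xi>: "norm \<xi> = \<delta>" using nx \<delta> by (simp add: \<xi>_def norm_cmul norm_divide)
      define \<phi> where "\<phi> = (\<lambda>\<tau>. lf ca cb (h (p + cmul \<tau> \<xi>) - p) - lf ca cb \<xi> * \<tau>)"
      have inU: "p + cmul \<tau> \<xi> \<in> cball p (2*\<delta>)" if "norm \<tau> \<le> 2" for \<tau>
      proof -
        have "dist p (p + cmul \<tau> \<xi>) = norm \<tau> * \<delta>" by (simp add: dist_norm norm_cmul n\<xi>)
        also have "\<dots> \<le> 2 * \<delta>" using that \<delta> by (simp add: mult_right_mono)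
        finally show ?thesis by simp
      qed
      have hol0: "(\<lambda>\<tau>. lf ca cb (h (p + cmul \<tau> \<xi>) - p)) holomorphic_on ball 0 2"
        by (rule line_holo[OF h]) (use inU cU in auto)
      have hol: "\<phi> holomorphic_on ball 0 2" unfolding \<phi>_def by (intro holomorphic_intros hol0)
      have contp: "continuous_on (cball 0 2) \<phi>"
      proof -
        have cl: "continuous_on (cball 0 2) (\<lambda>\<tau>. p + cmul \<tau> \<xi>)"
          by (auto simp: cmul_def intro!: continuous_intros)
        have "continuous_on (cball 0 2) (\<lambda>\<tau>. h (p + cmul \<tau> \<xi>))"
          by (rule continuous_on_compose2[OF cont cl]) (use inU in auto)
        then show ?thesis unfolding \<phi>_def lf_def by (intro continuous_intros)
      qed
      have tz: "tay \<phi> j = 0" if "j \<le> m" for j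
      proof -
        have "tay \<phi> j = tay (\<lambda>\<tau>. lf ca cb (h (p + cmul \<tau> \<xi>) - p)) j - (if j = 1 then lf ca cb \<xi> else 0)"
          unfolding \<phi>_def using tay_minus_lin[OF hol0, of "lf ca cb \<xi>" j] by (simp add: mult.commute)
        also have "\<dots> = lf ca cb (hpart h p j \<xi>) - (if j = 1 then lf ca cb \<xi> else 0)"
          using tay_lf[OF h U] by simp
        also have "\<dots> = 0"
        proof (cases "j = 0")
          case True then show ?thesis using hpart0[of h p, OF hp] by (simp add: lf_zero)
        next
          case j0: False
          show ?thesis
          proof (cases "j = 1")
            case True then show ?thesis using hpart1[OF h U hd] by simp
          next
            case False then show ?thesis using z[of j] j0 that by (simp add: lf_zero)
          qed
        qed
        finally show ?thesis .
      qed
      define \<tau>0 where "\<tau>0 = complex_of_real (norm x / \<delta>)"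
      have n\<tau>0: "norm \<tau>0 = norm x / \<delta>" using \<delta> by (simp add: \<tau>0_def norm_divide)
      have \<tau>01: "norm \<tau>0 \<le> 2/2" using x \<delta> n\<tau>0 by simp
      have cx: "cmul \<tau>0 \<xi> = x"
        using nx \<delta> by (simp add: \<tau>0_def \<xi>_def cmul_def prod_eq_iff)
      have Mb: "norm (\<phi> y) \<le> M'" if "norm y = 2" for y
      proof -
        have "norm (\<phi> y) \<le> norm (lf ca cb (h (p + cmul y \<xi>) - p)) + norm (lf ca cb \<xi> * y)"
          unfolding \<phi>_def by (rule norm_triangle_ineq4)
        also have "\<dots> \<le> M + (norm ca + norm cb) * \<delta> * 2"
          using M(2)[OF inU[of y]] that lf_norm[of ca cb \<xi>] n\<xi>
          by (intro add_mono) (auto simp: norm_mult)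
        finally show ?thesis by (simp add: M'_def mult_ac)
      qed
      have "norm (\<phi> \<tau>0 - (\<Sum>j\<le>m. tay \<phi> j * \<tau>0^j)) \<le> 2*M'*(norm \<tau>0 / 2)^(Suc m)"
        by (rule taylor_tail_bound[OF hol contp]) (use Mb \<tau>01 in auto)
      then have "norm (\<phi> \<tau>0) \<le> 2*M'*(norm \<tau>0 / 2)^(Suc m)" using tz by simp
      also have "\<dots> \<le> 2*M'*(norm \<tau>0)^(Suc m)"
        using M'0 by (intro mult_left_mono power_mono) auto
      also have "\<dots> = 2 * M' / \<delta> ^ Suc m * norm x ^ Suc m" by (simp add: n\<tau>0 power_divide)
      moreover have "lf ca cb \<xi> * \<tau>0 = lf ca cb x" using cx lf_cmul[of ca cb \<tau>0 \<xi>] by (simp add: mult.commute)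
      ultimately show ?thesis using cx by (simp add: \<phi>_def lf_diff)
    qed
  qed
qed

lemma jet_bound:
  assumes h: "holo2_on U h" and U: "open U" "p \<in> U" and hp: "h p = p"
    and hd: "(h has_derivative (\<lambda>x. x)) (at p)"
    and z: "\<And>j. 2 \<le> j \<Longrightarrow> j \<le> m \<Longrightarrow> hpart h p j = (\<lambda>x. 0)"
  obtains C \<delta> where "0 < \<delta>" "\<And>x. norm x < \<delta> \<Longrightarrow> norm (h (p + x) - p - x) \<le> C * norm x ^ Suc m"
proof -
  obtain C1 d1 where 1: "0 < d1" "\<And>x. norm x < d1 \<Longrightarrow> norm (lf 1 0 (h (p + x) - p - x)) \<le> C1 * norm x ^ Suc m"
    using jet_bound_comp[OF assms, where ca=1 and cb=0] by blast
  obtain C2 d2 where 2: "0 < d2" "\<And>x. norm x < d2 \<Longrightarrow> norm (lf 0 1 (h (p + x) - p - x)) \<le> C2 * norm x ^ Suc m"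
    using jet_bound_comp[OF assms, where ca=0 and cb=1] by blast
  show ?thesis
  proof (rule that[of "min d1 d2" "C1 + C2"])
    fix x :: c2 assume x: "norm x < min d1 d2"
    have "norm (h (p + x) - p - x) \<le> norm (lf 1 0 (h (p + x) - p - x)) + norm (lf 0 1 (h (p + x) - p - x))"
      using norm_Pair_le[of "fst (h (p + x) - p - x)" "snd (h (p + x) - p - x)"]
      unfolding prod.collapse by (simp add: lf_def)
    also have "\<dots> \<le> C1 * norm x ^ Suc m + C2 * norm x ^ Suc m" using 1 2 x by (intro add_mono) auto
    finally show "norm (h (p + x) - p - x) \<le> (C1 + C2) * norm x ^ Suc m" by (simp add: distrib_right)
  qed (use 1 2 in auto)
qed


lemma inv_deriv:
  assumes hg: "holo2_on Ug g" "open Ug" "p \<in> Ug" and gp: "g p = p"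
    and fd: "(f has_derivative (\<lambda>x. x)) (at p)"
    and inv: "eventually (\<lambda>x. f (g x) = x) (nhds p)"
  shows "(g has_derivative (\<lambda>x. x)) (at p)"
proof -
  have gd: "(g has_derivative Dh g p) (at p)" by (rule Dh(1)[OF hg(1) hg(3)])
  have fd': "(f has_derivative (\<lambda>x. x)) (at (g p))" using fd gp by simp
  have c: "((\<lambda>x. f (g x)) has_derivative (\<lambda>x. Dh g p x)) (at p)"
    using has_derivative_compose[OF gd fd'] by simp
  obtain S where S: "open S" "p \<in> S" "\<And>x. x \<in> S \<Longrightarrow> f (g x) = x"
    using inv unfolding eventually_nhds by blast
  have "((\<lambda>x. f (g x)) has_derivative (\<lambda>x. x)) (at p)"
    by (rule has_derivative_transform_within_open[OF has_derivative_ident S(1) S(2)]) (use S in auto)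
  from has_derivative_unique[OF c this] have "(\<lambda>x. Dh g p x) = (\<lambda>x. x)" .
  then have "Dh g p = (\<lambda>x. x)" by simp
  then show ?thesis using gd by simp
qed

lemma jet_zero:
  assumes hf: "holo2_on Uf f" "open Uf" "p \<in> Uf" and fp: "f p = p"
    and fd: "(f has_derivative (\<lambda>x. x)) (at p)"
    and hg: "holo2_on Ug g" "open Ug" "p \<in> Ug" and gp: "g p = p"
    and gd: "(g has_derivative (\<lambda>x. x)) (at p)"
    and inv: "eventually (\<lambda>x. f (g x) = x) (nhds p)"
    and z: "\<And>j. 2 \<le> j \<Longrightarrow> j \<le> m \<Longrightarrow> hpart f p j = (\<lambda>x. 0)"
  shows "\<And>j. 2 \<le> j \<Longrightarrow> j \<le> m \<Longrightarrow> hpart g p j = (\<lambda>x. 0)"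
proof -
  obtain C0 \<delta> where J: "0 < \<delta>" "\<And>x. norm x < \<delta> \<Longrightarrow> norm (f (p + x) - p - x) \<le> C0 * norm x ^ Suc m"
    using jet_bound[OF hf fp fd z] by blast
  define C where "C = max C0 0"
  have C: "0 \<le> C" "\<And>x. norm x < \<delta> \<Longrightarrow> norm (f (p + x) - p - x) \<le> C * norm x ^ Suc m"
  proof -
    show "0 \<le> C" by (simp add: C_def)
    fix x :: c2 assume "norm x < \<delta>"
    then have "norm (f (p + x) - p - x) \<le> C0 * norm x ^ Suc m" by (rule J(2))
    also have "\<dots> \<le> C * norm x ^ Suc m" by (rule mult_right_mono) (auto simp: C_def)
    finally show "norm (f (p + x) - p - x) \<le> C * norm x ^ Suc m" .
  qed
  have "\<forall>e>0. \<exists>d>0. \<forall>y. norm (y - p) < d \<longrightarrow> norm (g y - g p - (y - p)) \<le> e * norm (y - p)"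
    using gd unfolding has_derivative_at_alt by blast
  then obtain d1 where d1: "0 < d1" "\<And>y. norm (y - p) < d1 \<Longrightarrow> norm (g y - g p - (y - p)) \<le> 1 * norm (y - p)"
    by (meson zero_less_one)
  obtain d2 where d2: "0 < d2" "\<And>y. dist y p < d2 \<Longrightarrow> f (g y) = y"
    using inv unfolding eventually_nhds_metric by blast
  define d where "d = min d1 (min d2 (\<delta>/2))"
  have d: "0 < d" using d1 d2 J by (simp add: d_def)
  have key: "norm (g (p + y) - p - y) \<le> C * 2 ^ Suc m * norm y ^ Suc m" if y: "norm y < d" for y
  proof -
    define x where "x = g (p + y) - p"
    have "norm (x - y) \<le> norm y" using d1(2)[of "p + y"] y gp by (simp add: x_def d_def)
    then have nx: "norm x \<le> 2 * norm y" using norm_triangle_ineq2[of x y] by simp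
    then have xd: "norm x < \<delta>" using y by (simp add: d_def)
    have fx: "f (p + x) = p + y" using d2(2)[of "p + y"] y by (simp add: x_def d_def dist_norm)
    have "norm (g (p + y) - p - y) = norm (f (p + x) - p - x)"
      using fx by (simp add: x_def norm_minus_commute)
    also have "\<dots> \<le> C * norm x ^ Suc m" by (rule C(2)[OF xd])
    also have "\<dots> \<le> C * (2 * norm y) ^ Suc m" using nx C(1) by (intro mult_left_mono power_mono) auto
    finally show ?thesis by (simp add: power_mult_distrib mult_ac)
  qed
  have comp: "lf ca cb (hpart g p j x0) = 0" if j: "2 \<le> j" "j \<le> m" for j x0 ca cb
  proof -
    obtain r where r: "0 < r" "\<And>t. t \<in> ball 0 r \<Longrightarrow> p + cmul t x0 \<in> Ug"
      using line_ball[OF hg(2) hg(3)] by blast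
    define \<psi> where "\<psi> = (\<lambda>\<tau>. lf ca cb (g (p + cmul \<tau> x0) - p) - lf ca cb x0 * \<tau>)"
    have hol0: "(\<lambda>\<tau>. lf ca cb (g (p + cmul \<tau> x0) - p)) holomorphic_on ball 0 r"
      by (rule line_holo[OF hg(1)]) (use r in auto)
    have hol: "\<psi> holomorphic_on ball 0 r" unfolding \<psi>_def by (intro holomorphic_intros hol0)
    have "bo (Suc m) \<psi>"
    proof (rule boI[of "d / (norm x0 + 1)" _ "(norm ca + norm cb) * (C * 2 ^ Suc m) * norm x0 ^ Suc m"])
      show "0 < d / (norm x0 + 1)" using d by (simp add: add_nonneg_pos)
      fix \<tau> :: complex assume \<tau>: "norm \<tau> < d / (norm x0 + 1)"
      have n1: "0 < norm x0 + 1" by (simp add: add_nonneg_pos)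
      have "norm \<tau> * (norm x0 + 1) < d" using \<tau> pos_less_divide_eq[OF n1] by simp
      moreover have "norm \<tau> * norm x0 \<le> norm \<tau> * (norm x0 + 1)" by (simp add: mult_left_mono)
      ultimately have yd: "norm (cmul \<tau> x0) < d" unfolding norm_cmul by linarith
      have "\<psi> \<tau> = lf ca cb (g (p + cmul \<tau> x0) - p - cmul \<tau> x0)"
        by (simp add: \<psi>_def lf_diff lf_cmul mult.commute)
      then have "norm (\<psi> \<tau>) \<le> (norm ca + norm cb) * norm (g (p + cmul \<tau> x0) - p - cmul \<tau> x0)"
        by (simp add: lf_norm)
      also have "\<dots> \<le> (norm ca + norm cb) * (C * 2 ^ Suc m * norm (cmul \<tau> x0) ^ Suc m)"
        by (intro mult_left_mono key yd) auto
      also have "\<dots> = (norm ca + norm cb) * (C * 2 ^ Suc m) * norm x0 ^ Suc m * norm \<tau> ^ Suc m"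
        by (simp add: norm_cmul power_mult_distrib mult_ac)
      finally show "norm (\<psi> \<tau>) \<le> (norm ca + norm cb) * (C * 2 ^ Suc m) * norm x0 ^ Suc m * norm \<tau> ^ Suc m" .
    qed
    then have "tay \<psi> j = 0" using K2[OF hol r(1)] j by auto
    moreover have "tay \<psi> j = lf ca cb (hpart g p j x0)"
      unfolding \<psi>_def using tay_minus_lin[OF hol0 r(1), of "lf ca cb x0" j] tay_lf[OF hg(1) hg(2) hg(3)] j
      by (simp add: mult.commute)
    ultimately show ?thesis by simp
  qed
  fix j assume j: "2 \<le> j" "j \<le> m"
  show "hpart g p j = (\<lambda>x. 0)"
  proof
    fix x0
    show "hpart g p j x0 = 0" using comp[OF j, of 1 0 x0] comp[OF j, of 0 1 x0]
      by (simp add: lf_def prod_eq_iff)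
  qed
qed

lemma order_inv:
  assumes hf: "holo2_on Uf f" "open Uf" "p \<in> Uf" and fp: "f p = p"
    and fd: "(f has_derivative (\<lambda>x. x)) (at p)"
    and hg: "holo2_on Ug g" "open Ug" "p \<in> Ug" and gp: "g p = p"
    and gd: "(g has_derivative (\<lambda>x. x)) (at p)"
    and inv1: "eventually (\<lambda>x. g (f x) = x) (nhds p)"
    and inv2: "eventually (\<lambda>x. f (g x) = x) (nhds p)"
    and o: "has_order f p n"
  shows "has_order g p n"
proof -
  have n: "2 \<le> n" and zf: "\<And>j. 2 \<le> j \<Longrightarrow> j \<le> n - 1 \<Longrightarrow> hpart f p j = (\<lambda>x. 0)"
    and nz: "hpart f p n \<noteq> (\<lambda>x. 0)" using o unfolding has_order_def by auto
  have zg: "\<And>j. 2 \<le> j \<Longrightarrow> j \<le> n - 1 \<Longrightarrow> hpart g p j = (\<lambda>x. 0)"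
    by (rule jet_zero[OF hf fp fd hg gp gd inv2 zf])
  have "hpart g p n \<noteq> (\<lambda>x. 0)"
  proof
    assume a: "hpart g p n = (\<lambda>x. 0)"
    have "\<And>j. 2 \<le> j \<Longrightarrow> j \<le> n \<Longrightarrow> hpart g p j = (\<lambda>x. 0)"
    proof -
      fix j assume "2 \<le> j" "j \<le> n"
      then show "hpart g p j = (\<lambda>x. 0)" using zg[of j] a by (cases "j = n") auto
    qed
    then have "hpart f p n = (\<lambda>x. 0)"
      using jet_zero[OF hg gp gd hf fp fd inv1, of n n] n by blast
    then show False using nz by simp
  qed
  then show ?thesis using n zg unfolding has_order_def by auto
qed


lemma lin_add:
  assumes "(h has_derivative L) F" shows "L (x + y) = L x + L y"
  using has_derivative_bounded_linear[OF assms] by (simp add: linear_simps)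

lemma bih_of:
  assumes h: "holo2_on U h" and U: "ball p \<epsilon> \<subseteq> U" and R: "0 < R" and Rb: "R * (norm v + norm e) < \<epsilon>"
  shows "bih (\<lambda>z w. lf c1 c2 (h (p + cmul z v + cmul w e) - p)) R"
proof -
  have inb: "p + cmul z v + cmul w e \<in> ball p \<epsilon>" if "norm z \<le> R" "norm w \<le> R" for z w
  proof -
    have "norm (cmul z v + cmul w e) \<le> norm z * norm v + norm w * norm e"
      using norm_triangle_ineq[of "cmul z v" "cmul w e"] by (simp add: norm_cmul)
    also have "\<dots> \<le> R * norm v + R * norm e" using that by (intro add_mono mult_right_mono) auto
    also have "\<dots> < \<epsilon>" using Rb by (simp add: distrib_left)
    moreover have "- cmul z v - cmul w e = - (cmul z v + cmul w e)" by simp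
    ultimately show ?thesis by (simp add: dist_norm add.assoc del: minus_add_distrib)
  qed
  have cont: "continuous_on (cball 0 R \<times> cball 0 R) (\<lambda>(z,w). lf c1 c2 (h (p + cmul z v + cmul w e) - p))"
  proof -
    have c1: "continuous_on (cball 0 R \<times> cball 0 R) (\<lambda>zw. p + cmul (fst zw) v + cmul (snd zw) e)"
      by (auto simp: cmul_def intro!: continuous_intros)
    have "continuous_on (cball 0 R \<times> cball 0 R) (\<lambda>zw. h (p + cmul (fst zw) v + cmul (snd zw) e))"
      by (rule continuous_on_compose2[OF holo_cont[OF h] c1]) (use inb U in auto)
    then show ?thesis unfolding lf_def case_prod_beta by (intro continuous_intros)
  qed
  show ?thesis unfolding bih_def
  proof (intro conjI R cont ballI allI impI)
    fix w :: complex assume w: "w \<in> cball 0 R"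
    have "(\<lambda>z. lf c1 c2 (h ((p + cmul w e) + cmul z v) - p)) holomorphic_on ball 0 R"
      by (rule line_holo[OF h]) (use inb[of _ w] w U in \<open>auto simp: add_ac\<close>)
    then show "(\<lambda>z. lf c1 c2 (h (p + cmul z v + cmul w e) - p)) holomorphic_on ball 0 R"
      by (simp add: add_ac)
  next
    fix z :: complex assume z: "z \<in> cball 0 R"
    show "(\<lambda>w. lf c1 c2 (h (p + cmul z v + cmul w e) - p)) holomorphic_on ball 0 R"
      by (rule line_holo[OF h]) (use inb[of z] z U in auto)
  next
    fix u :: complex assume u: "norm u \<le> 1"
    have "(\<lambda>t. lf c1 c2 (h (p + cmul t (v + cmul u e)) - p)) holomorphic_on ball 0 R"
    proof (rule line_holo[OF h])
      fix t :: complex assume t: "t \<in> ball 0 R"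
      have "norm t * norm u \<le> norm t" using u by (simp add: mult_left_le)
      then have "norm (t * u) \<le> R" using t by (simp add: norm_mult)
      then show "p + cmul t (v + cmul u e) \<in> U"
        using inb[of t "t*u"] t U by (auto simp: cmul_add_right add.assoc)
    qed
    then show "(\<lambda>t. lf c1 c2 (h (p + cmul t v + cmul (t * u) e) - p)) holomorphic_on ball 0 R"
      by (simp add: cmul_add_right add.assoc)
  qed
qed

lemma vanish_order_1:
  assumes "(\<phi> has_field_derivative D) (at 0)"
  shows "vanish_order \<phi> = 1 \<longleftrightarrow> \<phi> 0 = 0 \<and> D \<noteq> 0"
    and "1 < vanish_order \<phi> \<longleftrightarrow> \<phi> 0 = 0 \<and> D = 0"
proof -
  have d0: "(deriv ^^ 0) \<phi> 0 = \<phi> 0" and d1: "(deriv ^^ 1) \<phi> 0 = D"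
    using DERIV_imp_deriv[OF assms] by auto
  have a: "vanish_order \<phi> = 0" if False: "\<phi> 0 \<noteq> 0"
  proof -
    have "(LEAST n. (deriv ^^ n) \<phi> 0 \<noteq> 0) = 0" using d0 False by (intro Least_eq_0) simp
    moreover have "\<exists>n. (deriv ^^ n) \<phi> 0 \<noteq> 0" using False d0 by (intro exI[of _ 0]) simp
    ultimately show "vanish_order \<phi> = 0" unfolding vanish_order_def by (auto simp: zero_enat_def)
  qed
  have b: "vanish_order \<phi> = 1" if z: "\<phi> 0 = 0" and False: "D \<noteq> 0"
  proof -
    have "(LEAST n. (deriv ^^ n) \<phi> 0 \<noteq> 0) = 1"
    proof (rule Least_equality)
      show "(deriv ^^ 1) \<phi> 0 \<noteq> 0" using d1 False by simp
      fix y assume "(deriv ^^ y) \<phi> 0 \<noteq> 0"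
      then show "1 \<le> y" using d0 z by (cases y) auto
    qed
    moreover have "\<exists>n. (deriv ^^ n) \<phi> 0 \<noteq> 0" using False d1 by (intro exI[of _ 1]) simp
    ultimately show "vanish_order \<phi> = 1" unfolding vanish_order_def by (auto simp: one_enat_def)
  qed
  have c: "1 < vanish_order \<phi>" if z: "\<phi> 0 = 0" and True: "D = 0"
  proof (cases "\<exists>n. (deriv ^^ n) \<phi> 0 \<noteq> 0")
    case False then show ?thesis unfolding vanish_order_def by simp
  next
    case ex: True
    have "2 \<le> (LEAST n. (deriv ^^ n) \<phi> 0 \<noteq> 0)"
    proof (rule LeastI2_ex[OF ex])
      fix x assume "(deriv ^^ x) \<phi> 0 \<noteq> 0"
      then show "2 \<le> x" using d0 d1 z True by (cases x; cases "x - 1") auto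
    qed
    then show ?thesis using ex unfolding vanish_order_def by (simp add: one_enat_def)
  qed
  show "vanish_order \<phi> = 1 \<longleftrightarrow> \<phi> 0 = 0 \<and> D \<noteq> 0"
    using a b c by (cases "\<phi> 0 = 0"; cases "D = 0") auto
  show "1 < vanish_order \<phi> \<longleftrightarrow> \<phi> 0 = 0 \<and> D = 0"
    using a b c by (cases "\<phi> 0 = 0"; cases "D = 0") auto
qed


locale LA =
  fixes f g :: "c2 \<Rightarrow> c2" and p v :: c2 and U :: "c2 set"
  assumes U: "open U" "p \<in> U" and hf: "holo2_on U f" and hg: "holo2_on U g"
    and fp: "f p = p" and gp: "g p = p"
    and fd: "(f has_derivative (\<lambda>x. x)) (at p)" and gd: "(g has_derivative (\<lambda>x. x)) (at p)"
    and inv: "\<And>x. x \<in> U \<Longrightarrow> g (f x) = x" and v0: "v \<noteq> 0"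
begin

definition "e = compl_vec v"
definition "dd = det2 v e"
definition "zc = lf (snd e / dd) (- fst e / dd)"
definition "wc = lf (- snd v / dd) (fst v / dd)"

lemma dd: "dd \<noteq> 0"
proof -
  have "\<exists>e. det2 v e \<noteq> 0"
  proof (cases "fst v = 0")
    case True
    then have "snd v \<noteq> 0" using v0 by (simp add: prod_eq_iff)
    then show ?thesis using True by (intro exI[of _ "(1,0)"]) (simp add: det2_def)
  next
    case False then show ?thesis by (intro exI[of _ "(0,1)"]) (simp add: det2_def)
  qed
  then have "det2 v (compl_vec v) \<noteq> 0" unfolding compl_vec_def by (rule someI_ex)
  then show ?thesis by (simp add: dd_def e_def)
qed

lemma zc_eq: "zc y = (snd e * fst y - fst e * snd y) / dd"
  by (simp add: zc_def lf_def diff_divide_distrib mult.commute)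

lemma wc_eq: "wc y = (fst v * snd y - snd v * fst y) / dd"
  by (simp add: wc_def lf_def diff_divide_distrib mult.commute)

lemma ddx: "dd = fst v * snd e - snd v * fst e"
  by (simp add: dd_def det2_def)

lemma wc_wcoord: "wcoord v y = wc y"
  by (simp add: wcoord_def wc_eq det2_def dd_def e_def)

lemma decomp: "y = cmul (zc y) v + cmul (wc y) e"
proof -
  have "zc y * fst v + wc y * fst e = ((snd e * fst y - fst e * snd y) * fst v + (fst v * snd y - snd v * fst y) * fst e) / dd"
    by (simp add: zc_eq wc_eq add_divide_distrib)
  also have "\<dots> = fst y * dd / dd" by (simp add: ddx algebra_simps)
  also have "\<dots> = fst y" using dd by simp
  finally have 1: "zc y * fst v + wc y * fst e = fst y" .
  have "zc y * snd v + wc y * snd e = ((snd e * fst y - fst e * snd y) * snd v + (fst v * snd y - snd v * fst y) * snd e) / dd"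
    by (simp add: zc_eq wc_eq add_divide_distrib)
  also have "\<dots> = snd y * dd / dd" by (simp add: ddx algebra_simps)
  also have "\<dots> = snd y" using dd by simp
  finally have 2: "zc y * snd v + wc y * snd e = snd y" .
  show ?thesis using 1 2 by (simp add: prod_eq_iff)
qed

lemma zc_wc_basis: "zc v = 1" "wc v = 0" "zc e = 0" "wc e = 1"
  using dd by (simp_all add: zc_eq wc_eq ddx mult.commute)

lemma zc_lin: "zc (x + y) = zc x + zc y" "zc (cmul c x) = c * zc x" "zc (x - y) = zc x - zc y" "zc 0 = 0"
  by (simp_all add: zc_def lf_add lf_cmul lf_diff lf_zero)

lemma wc_lin: "wc (x + y) = wc x + wc y" "wc (cmul c x) = c * wc x" "wc (x - y) = wc x - wc y" "wc 0 = 0"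
  by (simp_all add: wc_def lf_add lf_cmul lf_diff lf_zero)

lemma zc_wc_comb: "zc (cmul a v + cmul b e) = a" "wc (cmul a v + cmul b e) = b"
  by (simp_all add: zc_lin wc_lin zc_wc_basis)

definition "PF l z w = l (f (p + cmul z v + cmul w e) - p)"
definition "PG l z w = l (g (p + cmul z v + cmul w e) - p)"

lemma R0_ex: "\<exists>R. 0 < R \<and> bih (PF zc) R \<and> bih (PF wc) R \<and> bih (PG zc) R \<and> bih (PG wc) R \<and>
   (\<forall>z w. norm z \<le> R \<longrightarrow> norm w \<le> R \<longrightarrow> p + cmul z v + cmul w e \<in> U)"
proof -
  obtain \<epsilon> where \<epsilon>: "0 < \<epsilon>" "ball p \<epsilon> \<subseteq> U" using U open_contains_ball by blast
  define R where "R = \<epsilon> / (norm v + norm e + 1)"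
  have n1: "0 < norm v + norm e + 1" by (simp add: add_nonneg_pos)
  have R: "0 < R" using \<epsilon> n1 by (simp add: R_def)
  have Rb: "R * (norm v + norm e) < \<epsilon>"
  proof -
    have "R * (norm v + norm e) < R * (norm v + norm e + 1)" using R by simp
    also have "\<dots> = \<epsilon>" using n1 by (simp add: R_def)
    finally show ?thesis .
  qed
  have inb: "p + cmul z v + cmul w e \<in> U" if "norm z \<le> R" "norm w \<le> R" for z w
  proof -
    have "norm (cmul z v + cmul w e) \<le> norm z * norm v + norm w * norm e"
      using norm_triangle_ineq[of "cmul z v" "cmul w e"] by (simp add: norm_cmul)
    also have "\<dots> \<le> R * norm v + R * norm e" using that by (intro add_mono mult_right_mono) auto
    also have "\<dots> < \<epsilon>" using Rb by (simp add: distrib_left)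
    finally have "norm (cmul z v + cmul w e) < \<epsilon>" .
    moreover have "- cmul z v - cmul w e = - (cmul z v + cmul w e)" by simp
    ultimately have "p + cmul z v + cmul w e \<in> ball p \<epsilon>" by (simp add: dist_norm add.assoc del: minus_add_distrib)
    then show ?thesis using \<epsilon> by auto
  qed
  have "bih (PF l) R" if "l = zc \<or> l = wc" for l
    using that bih_of[OF hf \<epsilon>(2) R Rb] unfolding PF_def zc_def wc_def by auto
  moreover have "bih (PG l) R" if "l = zc \<or> l = wc" for l
    using that bih_of[OF hg \<epsilon>(2) R Rb] unfolding PG_def zc_def wc_def by auto
  ultimately show ?thesis using R inb by blast
qed

definition "R0 = (SOME R. 0 < R \<and> bih (PF zc) R \<and> bih (PF wc) R \<and> bih (PG zc) R \<and> bih (PG wc) R \<and>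
   (\<forall>z w. norm z \<le> R \<longrightarrow> norm w \<le> R \<longrightarrow> p + cmul z v + cmul w e \<in> U))"

lemma R0: "0 < R0" "bih (PF zc) R0" "bih (PF wc) R0" "bih (PG zc) R0" "bih (PG wc) R0"
  "\<And>z w. norm z \<le> R0 \<Longrightarrow> norm w \<le> R0 \<Longrightarrow> p + cmul z v + cmul w e \<in> U"
  using someI_ex[OF R0_ex] unfolding R0_def[symmetric] by auto

end


context LA begin

definition "A = (\<lambda>z. PF zc z 0)"
definition "B = (\<lambda>z. PF wc z 0)"
definition "Cf = gam (PF wc)"
definition "Df = gam (PF zc)"
definition "\<alpha> = (\<lambda>z. PG zc z 0)"
definition "\<beta> = (\<lambda>z. PG wc z 0)"
definition "\<gamma> = gam (PG wc)"

lemma tay_coords: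
  "zc (hpart f p j v) = tay A j" "wc (hpart f p j v) = tay B j"
  "zc (hpart g p j v) = tay \<alpha> j" "wc (hpart g p j v) = tay \<beta> j"
  unfolding A_def B_def \<alpha>_def \<beta>_def PF_def PG_def zc_def wc_def
  by (simp_all add: tay_lf[OF hf U] tay_lf[OF hg U])

lemma line_tay:
  assumes h: "holo2_on U h"
  shows "wcoord v (hpart h p j (v + cmul u e)) = tay (\<lambda>t. wc (h (p + cmul t v + cmul (t*u) e) - p)) j"
proof -
  have "wcoord v (hpart h p j (v + cmul u e)) = tay (\<lambda>t. wc (h (p + cmul t (v + cmul u e)) - p)) j"
    unfolding wc_wcoord wc_def by (rule tay_lf[OF h U])
  also have "(\<lambda>t. wc (h (p + cmul t (v + cmul u e)) - p)) = (\<lambda>t. wc (h (p + cmul t v + cmul (t*u) e) - p))"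
    by (simp add: cmul_add_right add.assoc)
  finally show ?thesis .
qed

lemma line_tay_deriv:
  assumes h: "holo2_on U h" and b: "bih (\<lambda>z w. wc (h (p + cmul z v + cmul w e) - p)) R" and j: "1 \<le> j"
  shows "((\<lambda>u. wcoord v (hpart h p j (v + cmul u e))) has_field_derivative
            tay (gam (\<lambda>z w. wc (h (p + cmul z v + cmul w e) - p))) (j - 1)) (at 0)"
  unfolding line_tay[OF h] by (rule bih_T5[OF b j])

lemma line_tay_0:
  assumes h: "holo2_on U h"
  shows "wcoord v (hpart h p j (v + cmul 0 e)) = wc (hpart h p j v)"
  by (simp add: wc_wcoord)

lemma f_decomp: "f (p + cmul \<tau> v) = p + cmul (A \<tau>) v + cmul (B \<tau>) e"
proof -
  have "f (p + cmul \<tau> v) - p = cmul (A \<tau>) v + cmul (B \<tau>) e"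
    using decomp[of "f (p + cmul \<tau> v) - p"] by (simp add: A_def B_def PF_def)
  then show ?thesis by (simp add: algebra_simps)
qed

lemma R1:
  assumes "norm \<tau> \<le> R0"
  shows "PG zc (A \<tau>) (B \<tau>) = \<tau>" "PG wc (A \<tau>) (B \<tau>) = 0"
proof -
  have y0: "p + cmul \<tau> v \<in> U" using R0(6)[of \<tau> 0] assms R0(1) by simp
  have "g (p + cmul (A \<tau>) v + cmul (B \<tau>) e) - p = cmul \<tau> v"
    using inv[OF y0] f_decomp[of \<tau>] by simp
  then show "PG zc (A \<tau>) (B \<tau>) = \<tau>" "PG wc (A \<tau>) (B \<tau>) = 0"
    by (simp_all add: PG_def zc_lin wc_lin zc_wc_basis)
qed

lemma R2:
  assumes \<tau>: "norm \<tau> \<le> R0" and a: "norm (A \<tau>) \<le> R0" and b: "norm (B \<tau>) \<le> R0"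
  shows "Df \<tau> * deriv (\<lambda>z. PG wc z (B \<tau>)) (A \<tau>) + Cf \<tau> * deriv (\<lambda>w. PG wc (A \<tau>) w) (B \<tau>) = 1"
proof -
  define y0 where "y0 = p + cmul \<tau> v"
  have y0: "y0 \<in> U" using R0(6)[of \<tau> 0] \<tau> R0(1) by (simp add: y0_def)
  have y1: "f y0 \<in> U" using R0(6)[OF a b] f_decomp[of \<tau>] by (simp add: y0_def)
  define Lf where "Lf = Dh f y0"
  define Lg where "Lg = Dh g (f y0)"
  have hLf: "(f has_derivative Lf) (at y0)" "\<And>c x. Lf (cmul c x) = cmul c (Lf x)"
    using Dh[OF hf y0] by (auto simp: Lf_def)
  have hLg: "(g has_derivative Lg) (at (f y0))" "\<And>c x. Lg (cmul c x) = cmul c (Lg x)"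
    using Dh[OF hg y1] by (auto simp: Lg_def)
  have c: "((\<lambda>x. g (f x)) has_derivative (\<lambda>x. Lg (Lf x))) (at y0)"
    by (rule has_derivative_compose[OF hLf(1) hLg(1)])
  have "((\<lambda>x. g (f x)) has_derivative (\<lambda>x. x)) (at y0)"
    by (rule has_derivative_transform_within_open[OF has_derivative_ident U(1) y0]) (use inv in auto)
  from has_derivative_unique[OF c this] have LL: "Lg (Lf e) = e" by metis
  have "Lf e = cmul (zc (Lf e)) v + cmul (wc (Lf e)) e" by (rule decomp)
  then have "e = cmul (zc (Lf e)) (Lg v) + cmul (wc (Lf e)) (Lg e)"
    using LL lin_add[OF hLg(1)] hLg(2) by metis
  then have eq1: "1 = zc (Lf e) * wc (Lg v) + wc (Lf e) * wc (Lg e)"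
    using zc_wc_basis(4) by (metis wc_lin(1) wc_lin(2))
  have "((\<lambda>w. wc (f (p + cmul \<tau> v + cmul w e) - p)) has_field_derivative wc (Lf e)) (at 0)"
    unfolding wc_def by (rule line_has_deriv) (use hLf in \<open>auto simp: y0_def\<close>)
  then have Cf: "Cf \<tau> = wc (Lf e)" unfolding Cf_def gam_def PF_def by (rule DERIV_imp_deriv)
  have "((\<lambda>w. zc (f (p + cmul \<tau> v + cmul w e) - p)) has_field_derivative zc (Lf e)) (at 0)"
    unfolding zc_def by (rule line_has_deriv) (use hLf in \<open>auto simp: y0_def\<close>)
  then have Df: "Df \<tau> = zc (Lf e)" unfolding Df_def gam_def PF_def by (rule DERIV_imp_deriv)
  have fy: "f y0 = p + cmul (A \<tau>) v + cmul (B \<tau>) e" using f_decomp by (simp add: y0_def)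
  have "((\<lambda>w. wc (g (p + cmul (A \<tau>) v + cmul w e) - p)) has_field_derivative wc (Lg e)) (at (B \<tau>))"
    unfolding wc_def by (rule line_has_deriv) (use hLg fy in auto)
  then have G1: "deriv (\<lambda>w. PG wc (A \<tau>) w) (B \<tau>) = wc (Lg e)" unfolding PG_def by (rule DERIV_imp_deriv)
  have "((\<lambda>z. wc (g ((p + cmul (B \<tau>) e) + cmul z v) - p)) has_field_derivative wc (Lg v)) (at (A \<tau>))"
    unfolding wc_def by (rule line_has_deriv) (use hLg fy in \<open>auto simp: add_ac\<close>)
  then have "((\<lambda>z. PG wc z (B \<tau>)) has_field_derivative wc (Lg v)) (at (A \<tau>))"
    unfolding PG_def by (simp add: add_ac)
  then have G2: "deriv (\<lambda>z. PG wc z (B \<tau>)) (A \<tau>) = wc (Lg v)" by (rule DERIV_imp_deriv)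
  show ?thesis using eq1 Cf Df G1 G2 by simp
qed

lemma at_p:
  assumes h: "holo2_on U h" and hd: "(h has_derivative (\<lambda>x. x)) (at p)"
  shows "gam (\<lambda>z w. wc (h (p + cmul z v + cmul w e) - p)) 0 = 1"
proof -
  have "((\<lambda>w. wc (h (p + cmul 0 v + cmul w e) - p)) has_field_derivative wc e) (at 0)"
    unfolding wc_def by (rule line_has_deriv[where L="\<lambda>x. x"]) (use hd in auto)
  then show ?thesis unfolding gam_def using DERIV_imp_deriv zc_wc_basis(4) by metis
qed

lemma PF_fun: "PF l = (\<lambda>z w. l (f (p + cmul z v + cmul w e) - p))"
  and PG_fun: "PG l = (\<lambda>z w. l (g (p + cmul z v + cmul w e) - p))"
  by (simp_all add: PF_def PG_def fun_eq_iff)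

lemma Cf0: "Cf 0 = 1" and \<gamma>0: "\<gamma> 0 = 1"
  using at_p[OF hf fd] at_p[OF hg gd] by (simp_all add: Cf_def \<gamma>_def PF_fun PG_fun)

end


lemma bo_of_tay_zero:
  assumes hol: "h holomorphic_on ball 0 R" and R: "0 < R" and z: "\<And>j. j < n \<Longrightarrow> tay h j = 0"
  shows "bo n h"
proof -
  have "bo n (\<lambda>t. (h t - tay h n * t^n) + tay h n * t^n)"
    by (rule bo_add[OF bo_mono[OF K1zero[OF hol R z]] bo_pow]) auto
  then show ?thesis by simp
qed

lemma bo_le:
  assumes "bo m Y" "0 < d" "\<And>t. norm t < d \<Longrightarrow> norm (X t) \<le> c * norm (Y t)"
  shows "bo m X"
proof -
  obtain C d1 where 1: "0 \<le> C" "0 < d1" "\<And>t. norm t < d1 \<Longrightarrow> norm (Y t) \<le> C * norm t ^ m"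
    using assms(1) by (meson boE)
  show ?thesis
  proof (rule boI[of "min d d1" _ "max c 0 * C"])
    fix t :: complex assume t: "norm t < min d d1"
    have "norm (X t) \<le> c * norm (Y t)" using assms(3) t by auto
    also have "\<dots> \<le> max c 0 * norm (Y t)" by (intro mult_right_mono) auto
    also have "\<dots> \<le> max c 0 * (C * norm t ^ m)" using 1(3) t by (intro mult_left_mono) auto
    finally show "norm (X t) \<le> max c 0 * C * norm t ^ m" by (simp add: mult_ac)
  qed (use 1 assms in auto)
qed

lemma bo_div:
  assumes "bo m (\<lambda>t. G t * H t)" "0 < d" "\<And>t. norm t < d \<Longrightarrow> c \<le> norm (H t)" "0 < c"
  shows "bo m G"
proof -
  obtain C d1 where 1: "0 \<le> C" "0 < d1" "\<And>t. norm t < d1 \<Longrightarrow> norm (G t * H t) \<le> C * norm t ^ m"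
    using assms(1) by (meson boE)
  show ?thesis
  proof (rule boI[of "min d d1" _ "C / c"])
    fix t :: complex assume t: "norm t < min d d1"
    have Hc: "c \<le> norm (H t)" using assms(3) t by auto
    have "norm (G t) * c \<le> norm (G t) * norm (H t)" using Hc by (intro mult_left_mono) auto
    also have "\<dots> \<le> C * norm t ^ m" using 1(3)[of t] t by (simp add: norm_mult)
    finally have "norm (G t) * c \<le> C * norm t ^ m" .
    then show "norm (G t) \<le> C / c * norm t ^ m" using assms(4) by (simp add: field_simps)
  qed (use 1 assms in auto)
qed

lemma tay_minus_const:
  assumes "F holomorphic_on ball 0 r" "0 < r"
  shows "tay (\<lambda>t. F t - c) j = tay F j - (if j = 0 then c else 0)"
proof -
  have "(deriv ^^ j) (\<lambda>t. F t - c) 0 = (deriv ^^ j) F 0 - (deriv ^^ j) (\<lambda>t. c) 0"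
    by (rule higher_deriv_diff) (use assms in \<open>auto intro!: holomorphic_intros\<close>)
  then show ?thesis by (auto simp: tay_def)
qed

lemma tay_deriv:
  "tay (deriv h) j = of_nat (Suc j) * tay h (Suc j)"
proof -
  have 1: "(deriv ^^ j) (deriv h) = (deriv ^^ Suc j) h" by (simp add: funpow_Suc_right del: funpow.simps)
  have 2: "(fact (Suc j) :: complex) = of_nat (Suc j) * fact j" by (simp only: fact_Suc of_nat_mult of_nat_fact)
  have 3: "(of_nat (Suc j) :: complex) \<noteq> 0" by (simp only: of_nat_eq_0_iff)
  have 4: "\<And>X b. of_nat (Suc j) * (X / (of_nat (Suc j) * b)) = X / (b::complex)"
    unfolding times_divide_eq_right by (rule nonzero_mult_divide_mult_cancel_left[OF 3])
  show ?thesis unfolding tay_def 1 2 4 ..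
qed

lemma sum_two:
  assumes "i1 \<le> M" "i2 \<le> M" "i1 \<noteq> i2" "\<And>j. j \<le> M \<Longrightarrow> c j = (if j = i1 then x1 else if j = i2 then x2 else 0)"
  shows "(\<Sum>j\<le>M. c j * (t::complex) ^ j) = x1 * t ^ i1 + x2 * t ^ i2"
proof -
  have "(\<Sum>j\<le>M. c j * t ^ j) = (\<Sum>j\<le>M. (if j = i1 then x1 * t ^ j else 0) + (if j = i2 then x2 * t ^ j else 0))"
    by (rule sum.cong) (use assms in auto)
  also have "\<dots> = x1 * t ^ i1 + x2 * t ^ i2"
    using assms(1,2) by (simp add: sum.distrib)
  finally show ?thesis .
qed

lemma bo_two:
  assumes hol: "h holomorphic_on ball 0 R" and R: "0 < R" and ii: "i1 \<le> M" "i2 \<le> M" "i1 \<noteq> i2"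
    and c: "\<And>j. j \<le> M \<Longrightarrow> tay h j = (if j = i1 then x1 else if j = i2 then x2 else 0)"
  shows "bo (Suc M) (\<lambda>t. h t - (x1 * t ^ i1 + x2 * t ^ i2))"
  using K1loc[OF hol R, of M] sum_two[OF ii c] by simp

context LA begin

lemma hol_fun:
  "A holomorphic_on ball 0 R0" "B holomorphic_on ball 0 R0" "\<alpha> holomorphic_on ball 0 R0"
  "\<beta> holomorphic_on ball 0 R0" "Cf holomorphic_on ball 0 R0" "Df holomorphic_on ball 0 R0"
  "\<gamma> holomorphic_on ball 0 R0"
  using bih_hz[OF R0(2), of 0] bih_hz[OF R0(3), of 0] bih_hz[OF R0(4), of 0] bih_hz[OF R0(5), of 0]
    bih_T2(1)[OF R0(3)] bih_T2(1)[OF R0(2)] bih_T2(1)[OF R0(5)] R0(1)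
  unfolding A_def B_def \<alpha>_def \<beta>_def Cf_def Df_def \<gamma>_def by auto

lemma tayAB01: "tay A 0 = 0" "tay A 1 = 1" "tay B 0 = 0" "tay B 1 = 0"
  using tay_coords(1,2)[of 0] tay_coords(1,2)[of 1] hpart0[of f p, OF fp] hpart1[OF hf U fd]
  by (simp_all add: zc_lin wc_lin zc_wc_basis)

lemma boA: "bo 2 (\<lambda>t. A t - t)"
proof -
  have "bo (Suc 1) (\<lambda>t. A t - (0 * t^0 + 1 * t^1))"
    by (rule bo_two[OF hol_fun(1) R0(1)]) (use tayAB01 in \<open>auto simp: le_Suc_eq\<close>)
  then show ?thesis by (simp add: numeral_2_eq_2)
qed

lemma boB: "bo 2 B"
  by (rule bo_of_tay_zero[OF hol_fun(2) R0(1)]) (use tayAB01 in \<open>auto simp: numeral_2_eq_2 less_Suc_eq\<close>)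

lemma small_ex: "\<exists>d>0. \<forall>t::complex. norm t < d \<longrightarrow> norm t \<le> R0/4 \<and> norm (A t) \<le> R0/4 \<and> norm (B t) \<le> R0/4"
proof -
  obtain d1 where d1: "0 < d1" "\<And>t. norm t < d1 \<Longrightarrow> norm (A t) \<le> 2 * norm t"
    using small_of_bo2[OF boA] by blast
  obtain C d2 where d2: "0 \<le> C" "0 < d2" "\<And>t. norm t < d2 \<Longrightarrow> norm (B t) \<le> C * norm t ^ 2"
    using boB by (meson boE)
  define d where "d = min (min d1 d2) (min (R0/8) (min 1 (R0/(4*(C+1)))))"
  have d: "0 < d" using d1 d2 R0(1) by (simp add: d_def)
  show ?thesis
  proof (rule exI[of _ d], intro conjI d allI impI)
    fix t :: complex assume t: "norm t < d"
    show "norm t \<le> R0/4" using t R0(1) by (simp add: d_def)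
    show "norm (A t) \<le> R0/4" using d1(2)[of t] t by (simp add: d_def)
    have "norm (B t) \<le> C * norm t ^ 2" using d2(3)[of t] t by (simp add: d_def)
    also have "\<dots> \<le> C * norm t" using t d2(1)
      by (intro mult_left_mono) (auto simp: d_def power2_eq_square mult_left_le_one_le)
    also have "\<dots> \<le> (C + 1) * norm t" by (simp add: mult_right_mono)
    also have "\<dots> \<le> (C + 1) * (R0/(4*(C+1)))" using t d2(1) by (intro mult_left_mono) (auto simp: d_def)
    also have "\<dots> = R0/4"
    proof -
      have "C + 1 \<noteq> 0" using d2(1) by linarith
      then show ?thesis by (simp add: field_simps)
    qed
    finally show "norm (B t) \<le> R0/4" .
  qed
qed

definition "ds = (SOME d. 0 < d \<and> (\<forall>t::complex. norm t < d \<longrightarrow> norm t \<le> R0/4 \<and> norm (A t) \<le> R0/4 \<and> norm (B t) \<le> R0/4))"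

lemma ds: "0 < ds" "\<And>t::complex. norm t < ds \<Longrightarrow> norm t \<le> R0/4" "\<And>t. norm t < ds \<Longrightarrow> norm (A t) \<le> R0/4"
  "\<And>t. norm t < ds \<Longrightarrow> norm (B t) \<le> R0/4"
  using someI_ex[OF small_ex] unfolding ds_def[symmetric] by auto

end


context LA begin

lemma T1G:
  obtains K L where "0 \<le> K" "0 \<le> L"
    "\<And>t. norm t < ds \<Longrightarrow> norm (\<beta> (A t)) \<le> L * norm (B t)"
    "\<And>t. norm t < ds \<Longrightarrow> norm (\<beta> (A t) + B t * \<gamma> (A t)) \<le> K * norm (B t * B t)"
proof -
  obtain K L where KL: "0 \<le> K" "0 \<le> L"
    "\<And>z w. norm z \<le> R0 \<Longrightarrow> norm w \<le> R0/2 \<Longrightarrow> norm (PG wc z w - PG wc z 0) \<le> L * norm w"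
    "\<And>z w. norm z \<le> R0 \<Longrightarrow> norm w \<le> R0/2 \<Longrightarrow> norm (PG wc z w - PG wc z 0 - w * gam (PG wc) z) \<le> K * norm w ^ 2"
    by (rule bih_T1[OF R0(5)]) blast
  show ?thesis
  proof (rule that[OF KL(1,2)])
    fix t :: complex assume t: "norm t < ds"
    have a: "norm (A t) \<le> R0" and b: "norm (B t) \<le> R0/2" and tt: "norm t \<le> R0"
      using ds(2-4)[OF t] R0(1) by auto
    have r1: "PG wc (A t) (B t) = 0" by (rule R1(2)[OF tt])
    show "norm (\<beta> (A t)) \<le> L * norm (B t)"
      using KL(3)[OF a b] r1 by (simp add: \<beta>_def)
    have "\<beta> (A t) + B t * \<gamma> (A t) = - (PG wc (A t) (B t) - PG wc (A t) 0 - B t * gam (PG wc) (A t))"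
      using r1 by (simp add: \<beta>_def \<gamma>_def)
    then have "norm (\<beta> (A t) + B t * \<gamma> (A t)) = norm (PG wc (A t) (B t) - PG wc (A t) 0 - B t * gam (PG wc) (A t))"
      by (simp only: norm_minus_cancel)
    also have "\<dots> \<le> K * norm (B t) ^ 2" by (rule KL(4)[OF a b])
    finally show "norm (\<beta> (A t) + B t * \<gamma> (A t)) \<le> K * norm (B t * B t)"
      by (simp add: norm_mult power2_eq_square)
  qed
qed

lemma beta_zero:
  assumes z: "\<And>j. j < n \<Longrightarrow> tay B j = 0"
  shows "j < n \<Longrightarrow> tay \<beta> j = 0"
proof -
  assume j: "j < n"
  have bB: "bo n B" by (rule bo_of_tay_zero[OF hol_fun(2) R0(1) z])
  obtain K L where KL: "0 \<le> K" "0 \<le> L"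
    "\<And>t. norm t < ds \<Longrightarrow> norm (\<beta> (A t)) \<le> L * norm (B t)"
    "\<And>t. norm t < ds \<Longrightarrow> norm (\<beta> (A t) + B t * \<gamma> (A t)) \<le> K * norm (B t * B t)"
    by (rule T1G) blast
  have bb: "bo n (\<lambda>t. \<beta> (A t))" by (rule bo_le[OF bB ds(1) KL(3)])
  obtain m where n: "n = Suc m" using j by (cases n) auto
  have "bo (Suc m) (\<lambda>t. \<beta> (A t) - 0 * t ^ m)" using bb n by simp
  from tay_comp[OF hol_fun(4) R0(1) boA this] j n show "tay \<beta> j = 0" by (auto simp: less_Suc_eq)
qed

lemma gA:
  shows "bo 1 (\<lambda>t. \<gamma> (A t) - 1)" "bo 0 (\<lambda>t. \<gamma> (A t))"
proof -
  have "bo (Suc 0) (\<lambda>t. \<gamma> t - tay \<gamma> 0 * t ^ 0)" by (rule K1zero[OF hol_fun(7) R0(1)]) auto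
  then have g1: "bo 1 (\<lambda>t. \<gamma> t - 1)" using \<gamma>0 by (simp add: tay_def)
  obtain d where d: "0 < d" "\<And>t. norm t < d \<Longrightarrow> norm (A t) \<le> 2 * norm t"
    using small_of_bo2[OF boA] by blast
  show b1: "bo 1 (\<lambda>t. \<gamma> (A t) - 1)" using bo_comp[OF g1 d] .
  have "bo 0 (\<lambda>t. (\<gamma> (A t) - 1) + 1 * t ^ 0)" by (rule bo_add[OF bo_mono[OF b1] bo_pow]) auto
  then show "bo 0 (\<lambda>t. \<gamma> (A t))" by simp
qed

lemma beta_lead:
  assumes z: "\<And>j. j \<le> n \<Longrightarrow> tay B j = 0"
  shows "tay \<beta> (Suc n) = - tay B (Suc n)"
proof -
  define c where "c = tay B (Suc n)"
  have bB1: "bo (Suc (Suc n)) (\<lambda>t. B t - c * t ^ Suc n)"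
    unfolding c_def by (rule K1zero[OF hol_fun(2) R0(1)]) (use z in auto)
  have bB: "bo (Suc n) B" by (rule bo_of_tay_zero[OF hol_fun(2) R0(1)]) (use z in auto)
  obtain K L where KL: "0 \<le> K" "0 \<le> L"
    "\<And>t. norm t < ds \<Longrightarrow> norm (\<beta> (A t)) \<le> L * norm (B t)"
    "\<And>t. norm t < ds \<Longrightarrow> norm (\<beta> (A t) + B t * \<gamma> (A t)) \<le> K * norm (B t * B t)"
    by (rule T1G) blast
  have e1: "bo (Suc (Suc n)) (\<lambda>t. \<beta> (A t) + B t * \<gamma> (A t))"
    by (rule bo_mono[OF bo_le[OF bo_mult[OF bB bB] ds(1) KL(4)]]) auto
  have e2: "bo (Suc (Suc n)) (\<lambda>t. (B t - c * t ^ Suc n) * \<gamma> (A t))"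
    using bo_mult[OF bB1 gA(2)] by simp
  have e3: "bo (Suc (Suc n)) (\<lambda>t. c * t ^ Suc n * (\<gamma> (A t) - 1))"
    using bo_mult[OF bo_pow[of "Suc n" c] gA(1)] by simp
  have "bo (Suc (Suc n)) (\<lambda>t. (\<beta> (A t) + B t * \<gamma> (A t)) - (B t - c * t ^ Suc n) * \<gamma> (A t)
                                - c * t ^ Suc n * (\<gamma> (A t) - 1))"
    by (intro bo_diff e1 e2 e3)
  then have "bo (Suc (Suc n)) (\<lambda>t. \<beta> (A t) - (- c) * t ^ Suc n)"
    by (simp add: algebra_simps)
  from tay_comp[OF hol_fun(4) R0(1) boA this] show ?thesis by (simp add: c_def)
qed

lemma alpha_coeffs:
  assumes zB: "\<And>j. j \<le> Suc r \<Longrightarrow> tay B j = 0" and Az: "\<And>j. 2 \<le> j \<Longrightarrow> j \<le> r \<Longrightarrow> tay A j = 0"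
    and Ar: "tay A (Suc r) = a" and r: "1 \<le> r"
  shows "\<And>j. j \<le> r \<Longrightarrow> tay \<alpha> j = (if j = 1 then 1 else 0)" "tay \<alpha> (Suc r) = - a"
proof -
  have bB: "bo (Suc (Suc r)) B" by (rule bo_of_tay_zero[OF hol_fun(2) R0(1)]) (use zB in auto)
  obtain K L where KL: "0 \<le> K" "0 \<le> L"
    "\<And>z w. norm z \<le> R0 \<Longrightarrow> norm w \<le> R0/2 \<Longrightarrow> norm (PG zc z w - PG zc z 0) \<le> L * norm w"
    "\<And>z w. norm z \<le> R0 \<Longrightarrow> norm w \<le> R0/2 \<Longrightarrow> norm (PG zc z w - PG zc z 0 - w * gam (PG zc) z) \<le> K * norm w ^ 2"
    by (rule bih_T1[OF R0(4)]) blast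
  have "bo (Suc (Suc r)) (\<lambda>t. \<alpha> (A t) - t)"
  proof (rule bo_le[OF bB ds(1)])
    fix t :: complex assume t: "norm t < ds"
    have a: "norm (A t) \<le> R0" and b: "norm (B t) \<le> R0/2" and tt: "norm t \<le> R0"
      using ds(2-4)[OF t] R0(1) by auto
    show "norm (\<alpha> (A t) - t) \<le> L * norm (B t)"
      using KL(3)[OF a b] R1(1)[OF tt] by (simp add: \<alpha>_def norm_minus_commute)
  qed
  moreover have "bo (Suc (Suc r)) (\<lambda>t. A t - (1 * t ^ 1 + a * t ^ Suc r))"
  proof (rule bo_two[OF hol_fun(1) R0(1)])
    fix j assume j: "j \<le> Suc r"
    show "tay A j = (if j = 1 then 1 else if j = Suc r then a else 0)"
    proof (cases "j = 0 \<or> j = 1 \<or> j = Suc r")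
      case True then show ?thesis using tayAB01 Ar r by auto
    next
      case False then show ?thesis using Az[of j] j by auto
    qed
  qed (use r in auto)
  ultimately have "bo (Suc (Suc r)) (\<lambda>t. (\<alpha> (A t) - t) - (A t - (1 * t ^ 1 + a * t ^ Suc r)))"
    by (rule bo_diff)
  then have b: "bo (Suc (Suc r)) (\<lambda>t. (\<alpha> (A t) - 1 * A t) - (- a) * t ^ Suc r)"
    by (simp add: algebra_simps)
  have hol: "(\<lambda>z. \<alpha> z - 1 * z) holomorphic_on ball 0 R0" by (intro holomorphic_intros hol_fun(3))
  have tc: "(\<forall>j<Suc r. tay (\<lambda>z. \<alpha> z - 1 * z) j = 0) \<and> tay (\<lambda>z. \<alpha> z - 1 * z) (Suc r) = - a"
    by (rule tay_comp[OF hol R0(1) boA b])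
  have tm: "tay (\<lambda>z. \<alpha> z - 1 * z) j = tay \<alpha> j - (if j = 1 then 1 else 0)" for j
    by (rule tay_minus_lin[OF hol_fun(3) R0(1)])
  show "tay \<alpha> j = (if j = 1 then 1 else 0)" if j: "j \<le> r" for j
  proof -
    have "tay (\<lambda>z. \<alpha> z - 1 * z) j = 0" using tc j by auto
    then show ?thesis using tm[of j] by simp
  qed
  show "tay \<alpha> (Suc r) = - a" using tc tm[of "Suc r"] r by simp
qed

end


context LA begin

lemma gamma_coeffs:
  assumes z\<beta>: "\<And>j. j \<le> Suc t \<Longrightarrow> tay \<beta> j = 0" and zB: "\<And>j. j \<le> t \<Longrightarrow> tay B j = 0"
    and C0: "tay Cf 0 = 1" and Cz: "\<And>j. 1 \<le> j \<Longrightarrow> j < t \<Longrightarrow> tay Cf j = 0" and Ct: "tay Cf t = b"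
    and t1: "1 \<le> t"
  shows "\<And>j. j < t \<Longrightarrow> tay \<gamma> j = (if j = 0 then 1 else 0)" "tay \<gamma> t = - b"
proof -
  define \<beta>' where "\<beta>' = deriv \<beta>"
  have hol\<beta>': "\<beta>' holomorphic_on ball 0 R0" unfolding \<beta>'_def by (rule holomorphic_deriv[OF hol_fun(4) open_ball])
  have b\<beta>': "bo (Suc t) \<beta>'"
  proof (rule bo_of_tay_zero[OF hol\<beta>' R0(1)])
    fix j assume "j < Suc t"
    then show "tay \<beta>' j = 0" unfolding \<beta>'_def tay_deriv using z\<beta>[of "Suc j"] by simp
  qed
  obtain dA where dA: "0 < dA" "\<And>t. norm t < dA \<Longrightarrow> norm (A t) \<le> 2 * norm t"
    using small_of_bo2[OF boA] by blast
  have b\<beta>'A: "bo (Suc t) (\<lambda>\<tau>. \<beta>' (A \<tau>))" by (rule bo_comp[OF b\<beta>' dA])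
  have bB: "bo (Suc t) B" by (rule bo_of_tay_zero[OF hol_fun(2) R0(1)]) (use zB in auto)
  define Gz where "Gz = (\<lambda>\<tau>. deriv (\<lambda>z. PG wc z (B \<tau>)) (A \<tau>))"
  define Gw where "Gw = (\<lambda>\<tau>. deriv (\<lambda>w. PG wc (A \<tau>) w) (B \<tau>))"
  obtain K4 where K4: "0 \<le> K4"
    "\<And>z w. norm z \<le> R0/2 \<Longrightarrow> norm w \<le> R0/2 \<Longrightarrow>
       norm (deriv (\<lambda>z. PG wc z w) z - deriv (\<lambda>z. PG wc z 0) z) \<le> K4 * norm w"
    by (rule bih_T4[OF R0(5)]) blast
  obtain K3 where K3: "0 \<le> K3"
    "\<And>z w. norm z \<le> R0 \<Longrightarrow> norm w \<le> R0/4 \<Longrightarrow> norm (deriv (\<lambda>w. PG wc z w) w - gam (PG wc) z) \<le> K3 * norm w"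
    by (rule bih_T3[OF R0(5)]) blast
  have bGz1: "bo (Suc t) (\<lambda>\<tau>. Gz \<tau> - \<beta>' (A \<tau>))"
  proof (rule bo_le[OF bB ds(1)])
    fix \<tau> :: complex assume \<tau>: "norm \<tau> < ds"
    have a: "norm (A \<tau>) \<le> R0/2" and b: "norm (B \<tau>) \<le> R0/2" using ds(3,4)[OF \<tau>] R0(1) by auto
    have "\<beta>' = deriv (\<lambda>z. PG wc z 0)" by (simp add: \<beta>'_def \<beta>_def)
    then show "norm (Gz \<tau> - \<beta>' (A \<tau>)) \<le> K4 * norm (B \<tau>)" using K4(2)[OF a b] by (simp add: Gz_def)
  qed
  have bGz: "bo (Suc t) Gz" using bo_add[OF bGz1 b\<beta>'A] by simp
  have bGw: "bo (Suc t) (\<lambda>\<tau>. Gw \<tau> - \<gamma> (A \<tau>))"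
  proof (rule bo_le[OF bB ds(1)])
    fix \<tau> :: complex assume \<tau>: "norm \<tau> < ds"
    have a: "norm (A \<tau>) \<le> R0" and b: "norm (B \<tau>) \<le> R0/4" using ds(3,4)[OF \<tau>] R0(1) by auto
    show "norm (Gw \<tau> - \<gamma> (A \<tau>)) \<le> K3 * norm (B \<tau>)" using K3(2)[OF a b] by (simp add: Gw_def \<gamma>_def)
  qed
  have bnd0: "bo 0 h" if "h holomorphic_on ball 0 R0" for h
  proof -
    have "bo (Suc 0) (\<lambda>t. h t - tay h 0 * t ^ 0)" by (rule K1zero[OF that R0(1)]) auto
    from bo_add[OF bo_mono[OF this] bo_pow[of 0 "tay h 0"]] show ?thesis by simp
  qed
  have bDf: "bo 0 Df" and bCf: "bo 0 Cf" using bnd0 hol_fun(5,6) by auto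
  have bE: "bo (Suc t) (\<lambda>\<tau>. \<gamma> (A \<tau>) * Cf \<tau> - 1)"
  proof (rule bo_cong[OF _ ds(1)])
    show "bo (Suc t) (\<lambda>\<tau>. - (Df \<tau> * Gz \<tau>) - Cf \<tau> * (Gw \<tau> - \<gamma> (A \<tau>)))"
      using bo_diff[OF bo_minus[OF bo_mult[OF bDf bGz]] bo_mult[OF bCf bGw]] by simp
    fix \<tau> :: complex assume \<tau>: "norm \<tau> < ds"
    have a: "norm (A \<tau>) \<le> R0" and b: "norm (B \<tau>) \<le> R0" and tt: "norm \<tau> \<le> R0"
      using ds(2-4)[OF \<tau>] R0(1) by auto
    have "Df \<tau> * Gz \<tau> + Cf \<tau> * Gw \<tau> = 1" using R2[OF tt a b] by (simp add: Gz_def Gw_def)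
    then show "- (Df \<tau> * Gz \<tau>) - Cf \<tau> * (Gw \<tau> - \<gamma> (A \<tau>)) = \<gamma> (A \<tau>) * Cf \<tau> - 1"
      by (simp add: algebra_simps)
  qed
  have bC: "bo (Suc t) (\<lambda>\<tau>. Cf \<tau> - (1 * \<tau> ^ 0 + b * \<tau> ^ t))"
  proof (rule bo_two[OF hol_fun(5) R0(1)])
    fix j assume j: "j \<le> t"
    show "tay Cf j = (if j = 0 then 1 else if j = t then b else 0)"
      using C0 Ct Cz[of j] j t1 by auto
  qed (use t1 in auto)
  have bC1: "bo 1 (\<lambda>\<tau>. Cf \<tau> - 1)"
  proof -
    have "bo (Suc 0) (\<lambda>\<tau>. Cf \<tau> - tay Cf 0 * \<tau> ^ 0)" by (rule K1zero[OF hol_fun(5) R0(1)]) auto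
    then show ?thesis using C0 by simp
  qed
  define G where "G = (\<lambda>\<tau>. (\<gamma> (A \<tau>) - 1) - (- b) * \<tau> ^ t)"
  have bGC: "bo (Suc t) (\<lambda>\<tau>. G \<tau> * Cf \<tau>)"
  proof -
    have e3: "bo (Suc t) (\<lambda>\<tau>. b * \<tau> ^ t * (Cf \<tau> - 1))" using bo_mult[OF bo_pow[of t b] bC1] by simp
    have "bo (Suc t) (\<lambda>\<tau>. (\<gamma> (A \<tau>) * Cf \<tau> - 1) - (Cf \<tau> - (1 * \<tau> ^ 0 + b * \<tau> ^ t)) + b * \<tau> ^ t * (Cf \<tau> - 1))"
      by (intro bo_add bo_diff bE bC e3)
    then show ?thesis by (simp add: G_def algebra_simps)
  qed
  obtain C d where Cd: "0 \<le> C" "0 < d" "\<And>\<tau>. norm \<tau> < d \<Longrightarrow> norm (Cf \<tau> - 1) \<le> C * norm \<tau> ^ 1"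
    using bC1 by (meson boE)
  have lowC: "1/2 \<le> norm (Cf \<tau>)" if \<tau>: "norm \<tau> < min d (1 / (2 * (C + 1)))" for \<tau>
  proof -
    have "norm (Cf \<tau> - 1) \<le> C * norm \<tau>" using Cd(3)[of \<tau>] \<tau> by simp
    also have "\<dots> \<le> (C + 1) * norm \<tau>" by (simp add: mult_right_mono)
    also have "\<dots> \<le> (C + 1) * (1 / (2 * (C + 1)))" using \<tau> Cd(1) by (intro mult_left_mono) auto
    also have "\<dots> = 1/2" using Cd(1) by simp
    finally have "norm (Cf \<tau> - 1) \<le> 1/2" .
    moreover have "1 \<le> norm (Cf \<tau>) + norm (Cf \<tau> - 1)"
      using norm_triangle_ineq4[of "Cf \<tau>" "Cf \<tau> - 1"] by simp
    ultimately show ?thesis by simp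
  qed
  have bG: "bo (Suc t) G"
    by (rule bo_div[OF bGC, where d="min d (1 / (2 * (C + 1)))" and c="1/2"]) (use Cd lowC in auto)
  have hol: "(\<lambda>z. \<gamma> z - 1) holomorphic_on ball 0 R0" by (intro holomorphic_intros hol_fun(7))
  have tc: "(\<forall>j<t. tay (\<lambda>z. \<gamma> z - 1) j = 0) \<and> tay (\<lambda>z. \<gamma> z - 1) t = - b"
    by (rule tay_comp[OF hol R0(1) boA]) (use bG in \<open>simp add: G_def\<close>)
  have tm: "tay (\<lambda>z. \<gamma> z - 1) j = tay \<gamma> j - (if j = 0 then 1 else 0)" for j
    by (rule tay_minus_const[OF hol_fun(7) R0(1)])
  show "tay \<gamma> j = (if j = 0 then 1 else 0)" if j: "j < t" for j
  proof -
    have "tay (\<lambda>z. \<gamma> z - 1) j = 0" using tc j by auto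
    then show ?thesis using tm[of j] by simp
  qed
  show "tay \<gamma> t = - b" using tc tm[of t] t1 by simp
qed

end


context LA begin

lemma hpart_v: "hpart h p j v = cmul (zc (hpart h p j v)) v + cmul (wc (hpart h p j v)) e"
  by (rule decomp)

lemma cd_iff: "char_dir Q v \<longleftrightarrow> wc (Q v) = 0"
proof
  assume "char_dir Q v"
  then obtain c where "Q v = cmul c v" unfolding char_dir_def by blast
  then show "wc (Q v) = 0" by (simp add: wc_lin zc_wc_basis)
next
  assume w: "wc (Q v) = 0"
  have "Q v = cmul (zc (Q v)) v" using decomp[of "Q v"] w by simp
  then show "char_dir Q v" using v0 unfolding char_dir_def by blast
qed

lemma deg_iff: "degenerate_char_dir Q v \<longleftrightarrow> zc (Q v) = 0 \<and> wc (Q v) = 0"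
  using decomp[of "Q v"] v0 unfolding degenerate_char_dir_def by (auto simp: zc_lin wc_lin)

lemma nondeg_iff: "nondegenerate_char_dir Q v \<longleftrightarrow> zc (Q v) \<noteq> 0 \<and> wc (Q v) = 0"
proof
  assume "nondegenerate_char_dir Q v"
  then obtain c where "c \<noteq> 0" "Q v = cmul c v" unfolding nondegenerate_char_dir_def by blast
  then show "zc (Q v) \<noteq> 0 \<and> wc (Q v) = 0" by (simp add: zc_lin wc_lin zc_wc_basis)
next
  assume w: "zc (Q v) \<noteq> 0 \<and> wc (Q v) = 0"
  have "Q v = cmul (zc (Q v)) v" using decomp[of "Q v"] w by simp
  then show "nondegenerate_char_dir Q v" using v0 w unfolding nondegenerate_char_dir_def by blast
qed

lemma coef_a_eq: "wc (hpart h p (r + 1) v) = 0 \<Longrightarrow> coef_a h p v r = zc (hpart h p (r + 1) v)"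
proof -
  assume w: "wc (hpart h p (r + 1) v) = 0"
  have ex: "hpart h p (r + 1) v = cmul (zc (hpart h p (r + 1) v)) v" using decomp[of "hpart h p (r + 1) v"] w by simp
  then have "hpart h p (r + 1) v = cmul (coef_a h p v r) v" unfolding coef_a_def by (rule someI)
  then have "zc (hpart h p (r + 1) v) = coef_a h p v r" by (simp add: zc_lin zc_wc_basis)
  then show ?thesis by simp
qed

lemma lj_f:
  assumes "1 \<le> j"
  shows "lj f p v j = 1 \<longleftrightarrow> tay B j = 0 \<and> tay Cf (j - 1) \<noteq> 0"
    and "1 < lj f p v j \<longleftrightarrow> tay B j = 0 \<and> tay Cf (j - 1) = 0"
    and "((\<lambda>u. wcoord v (hpart f p j (v + cmul u e))) has_field_derivative tay Cf (j - 1)) (at 0)"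
proof -
  have d: "((\<lambda>u. wcoord v (hpart f p j (v + cmul u e))) has_field_derivative tay Cf (j - 1)) (at 0)"
    using line_tay_deriv[OF hf _ assms] R0(3) unfolding Cf_def PF_fun by blast
  have v0: "wcoord v (hpart f p j (v + cmul 0 e)) = tay B j" using tay_coords(2) by (simp add: wc_wcoord)
  show "lj f p v j = 1 \<longleftrightarrow> tay B j = 0 \<and> tay Cf (j - 1) \<noteq> 0"
    "1 < lj f p v j \<longleftrightarrow> tay B j = 0 \<and> tay Cf (j - 1) = 0"
    using vanish_order_1[OF d] v0 unfolding lj_def e_def[symmetric] by auto
  show "((\<lambda>u. wcoord v (hpart f p j (v + cmul u e))) has_field_derivative tay Cf (j - 1)) (at 0)" by (rule d)
qed

lemma lj_g:
  assumes "1 \<le> j"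
  shows "lj g p v j = 1 \<longleftrightarrow> tay \<beta> j = 0 \<and> tay \<gamma> (j - 1) \<noteq> 0"
    and "1 < lj g p v j \<longleftrightarrow> tay \<beta> j = 0 \<and> tay \<gamma> (j - 1) = 0"
    and "((\<lambda>u. wcoord v (hpart g p j (v + cmul u e))) has_field_derivative tay \<gamma> (j - 1)) (at 0)"
proof -
  have d: "((\<lambda>u. wcoord v (hpart g p j (v + cmul u e))) has_field_derivative tay \<gamma> (j - 1)) (at 0)"
    using line_tay_deriv[OF hg _ assms] R0(5) unfolding \<gamma>_def PG_fun by blast
  have v0: "wcoord v (hpart g p j (v + cmul 0 e)) = tay \<beta> j" using tay_coords(4) by (simp add: wc_wcoord)
  show "lj g p v j = 1 \<longleftrightarrow> tay \<beta> j = 0 \<and> tay \<gamma> (j - 1) \<noteq> 0"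
    "1 < lj g p v j \<longleftrightarrow> tay \<beta> j = 0 \<and> tay \<gamma> (j - 1) = 0"
    using vanish_order_1[OF d] v0 unfolding lj_def e_def[symmetric] by auto
  show "((\<lambda>u. wcoord v (hpart g p j (v + cmul u e))) has_field_derivative tay \<gamma> (j - 1)) (at 0)" by (rule d)
qed

lemma coef_b_f: "coef_b f p v t = tay Cf t"
  using DERIV_imp_deriv[OF lj_f(3)[of "t + 1"]] unfolding coef_b_def e_def by simp

lemma coef_b_g: "coef_b g p v t = tay \<gamma> t"
  using DERIV_imp_deriv[OF lj_g(3)[of "t + 1"]] unfolding coef_b_def e_def by simp

end


context LA begin

lemma main_LA:
  fixes k r t :: nat and s :: enat
  assumes order: "has_order f p (k + 1)"
    and cond1: "char_dir_degree f p k v s"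
    and cond2: "nondeg_degree f p k v r" and kr: "k < r" and rs: "enat r < s"
    and cond3: "order_one_degree f p k v t" and kt: "k \<le> t" and tr: "t \<le> r"
  shows "char_dir_degree g p k v s \<and> nondeg_degree g p k v r \<and> order_one_degree g p k v t \<and>
    coef_a g p v r = - coef_a f p v r \<and> coef_b g p v t = - coef_b f p v t \<and>
    coef_a f p v r \<noteq> 0 \<and> coef_b f p v t \<noteq> 0"
proof -
  have k1: "1 \<le> k" using order unfolding has_order_def by auto
  have zf: "\<And>j. 2 \<le> j \<Longrightarrow> j \<le> k \<Longrightarrow> hpart f p j = (\<lambda>x. 0)" using order unfolding has_order_def by auto
  have t1: "1 \<le> t" using k1 kt by simp
  have r1: "1 \<le> r" using k1 kr by simp
  have sle: "enat j \<le> s" if "j \<le> Suc r" for j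
  proof -
    have "enat (Suc r) \<le> s" using rs by (simp add: Suc_ile_eq)
    then show ?thesis using that by (meson enat_ord_simps(1) order_trans)
  qed
  have Bz: "tay B j = 0" if j: "enat j \<le> s" for j
  proof (cases "j \<le> 1")
    case True then show ?thesis using tayAB01 by (cases j) auto
  next
    case False
    show ?thesis
    proof (cases "j \<le> k")
      case True then show ?thesis using zf[of j] False tay_coords(2)[of j] by (simp add: wc_lin)
    next
      case False
      then have "char_dir (hpart f p j) v" using cond1 j unfolding char_dir_degree_def by auto
      then show ?thesis using cd_iff tay_coords(2) by simp
    qed
  qed
  have Bs: "tay B (Suc n) \<noteq> 0" if sn: "s = enat n" for n
    using cond1 sn unfolding char_dir_degree_def using cd_iff tay_coords(2) by auto
  define a where "a = coef_a f p v r"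
  have Az: "tay A j = 0" if "2 \<le> j" "j \<le> r" for j
  proof (cases "j \<le> k")
    case True then show ?thesis using zf[of j] that tay_coords(1)[of j] by (simp add: zc_lin)
  next
    case False
    then have "degenerate_char_dir (hpart f p j) v" using cond2 that unfolding nondeg_degree_def by auto
    then show ?thesis using deg_iff tay_coords(1) by simp
  qed
  have nd: "nondegenerate_char_dir (hpart f p (r + 1)) v" using cond2 unfolding nondeg_degree_def by auto
  then have ndz: "zc (hpart f p (r + 1) v) \<noteq> 0" "wc (hpart f p (r + 1) v) = 0" using nondeg_iff by auto
  have Ar: "tay A (Suc r) = a" using coef_a_eq[OF ndz(2)] tay_coords(1)[of "r+1"] by (simp add: a_def)
  have a0: "a \<noteq> 0" using ndz(1) coef_a_eq[OF ndz(2)] by (simp add: a_def)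
  define b where "b = coef_b f p v t"
  have C0: "tay Cf 0 = 1" using Cf0 by (simp add: tay_def)
  have Cz: "tay Cf i = 0" if "1 \<le> i" "i < t" for i
  proof (cases "i + 1 \<le> k")
    case True
    have "hpart f p (i + 1) = (\<lambda>x. 0)" using zf[of "i+1"] True that by auto
    then have "((\<lambda>u. wcoord v (hpart f p (i + 1) (v + cmul u e))) has_field_derivative 0) (at 0)"
      by (simp add: wc_wcoord wc_lin)
    from DERIV_unique[OF lj_f(3)[of "i+1"] this] show ?thesis by simp
  next
    case False
    then have "1 < lj f p v (i + 1)" using cond3 that unfolding order_one_degree_def by auto
    then show ?thesis using lj_f(2)[of "i+1"] by simp
  qed
  have lt: "lj f p v (t + 1) = 1" using cond3 unfolding order_one_degree_def by auto
  then have Ct: "tay Cf t = b" and b0: "b \<noteq> 0" using lj_f(1)[of "t+1"] coef_b_f by (auto simp: b_def)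
  have \<beta>z: "tay \<beta> j = 0" if "enat j \<le> s" for j
  proof (rule beta_zero[of "Suc j"])
    fix i assume "i < Suc j"
    then have "enat i \<le> enat j" by simp
    then show "tay B i = 0" using Bz that order_trans by blast
  qed simp
  have \<beta>s: "tay \<beta> (Suc n) \<noteq> 0" if sn: "s = enat n" for n
  proof -
    have "tay \<beta> (Suc n) = - tay B (Suc n)" by (rule beta_lead) (use Bz sn in auto)
    then show ?thesis using Bs[OF sn] by simp
  qed
  have \<alpha>c: "\<And>j. j \<le> r \<Longrightarrow> tay \<alpha> j = (if j = 1 then 1 else 0)" "tay \<alpha> (Suc r) = - a"
    by (rule alpha_coeffs[OF _ Az Ar r1]; use Bz sle in auto)+
  have \<gamma>c: "\<And>j. j < t \<Longrightarrow> tay \<gamma> j = (if j = 0 then 1 else 0)" "tay \<gamma> t = - b"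
    by (rule gamma_coeffs[OF _ _ C0 Cz Ct t1]; use \<beta>z Bz sle tr in auto)+
  have g1: "char_dir_degree g p k v s"
    unfolding char_dir_degree_def using \<beta>z \<beta>s cd_iff tay_coords(4) by auto
  have g2: "nondeg_degree g p k v r"
    unfolding nondeg_degree_def
  proof (intro conjI allI impI)
    fix j assume j: "k + 1 \<le> j \<and> j \<le> r"
    show "degenerate_char_dir (hpart g p j) v"
      using deg_iff tay_coords(3,4) \<alpha>c(1)[of j] \<beta>z[of j] j k1 sle[of j] by auto
  next
    show "nondegenerate_char_dir (hpart g p (r + 1)) v"
      using nondeg_iff tay_coords(3,4) \<alpha>c(2) \<beta>z[of "r+1"] sle[of "r+1"] a0 by auto
  qed
  have g3: "order_one_degree g p k v t"
    unfolding order_one_degree_def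
  proof (intro conjI allI impI)
    show "lj g p v (t + 1) = 1" using lj_g(1)[of "t+1"] \<beta>z[of "t+1"] sle[of "t+1"] tr \<gamma>c(2) b0 by auto
  next
    fix j assume j: "k + 1 \<le> j \<and> j \<le> t"
    have jt: "j - 1 < t" and j0: "j - 1 \<noteq> 0" and j1: "1 \<le> j" using j k1 by auto
    have "tay \<gamma> (j - 1) = 0" using \<gamma>c(1)[OF jt] j0 by simp
    moreover have "tay \<beta> j = 0" using \<beta>z[of j] sle[of j] tr j by auto
    ultimately show "1 < lj g p v j" using lj_g(2)[OF j1] by simp
  qed
  have ga: "coef_a g p v r = - a"
    using coef_a_eq[of g r] tay_coords(3,4)[of "r+1"] \<alpha>c(2) \<beta>z[of "r+1"] sle[of "r+1"] by simp
  have gb: "coef_b g p v t = - b" using coef_b_g \<gamma>c(2) by simp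
  show ?thesis using g1 g2 g3 ga gb a0 b0 by (simp add: a_def b_def)
qed

end


lemma pow_2t: "(z::complex) ^ (2 * t) = (z ^ t) ^ 2"
  by (simp add: power_mult[symmetric] mult.commute)

lemma root_ex:
  assumes n: "0 < n" shows "\<exists>w::complex. w ^ n = z"
proof (cases "z = 0")
  case True then show ?thesis using n by (intro exI[of _ 0]) simp
next
  case False
  have "exp (Ln z / of_nat n) ^ n = exp (of_nat n * (Ln z / of_nat n))" by (rule exp_of_nat_mult[symmetric])
  also have "of_nat n * (Ln z / of_nat n) = Ln z" using n by simp
  also have "exp (Ln z) = z" using False by simp
  finally show ?thesis by blast
qed

lemma transv_disj:
  fixes a b :: complex and r t :: nat
  assumes a: "a \<noteq> 0" and b: "b \<noteq> 0" and t: "0 < t" and r: "r = 2 * t"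
  shows "(\<exists>\<alpha>. \<alpha> ^ r = - 1 / (a * of_nat r) \<and> 0 < Re (- b * \<alpha> ^ t)) \<or>
         (\<exists>\<alpha>. \<alpha> ^ r = - 1 / (- a * of_nat r) \<and> 0 < Re (- (- b) * \<alpha> ^ t))"
proof (rule ccontr)
  assume H: "\<not> ?thesis"
  define c where "c = - 1 / (a * of_nat r)"
  have r0: "r \<noteq> 0" using t r by simp
  have c0: "c \<noteq> 0" using a r0 by (simp add: c_def)
  have mc: "- 1 / (- a * of_nat r) = - c" by (simp add: c_def)
  have rp: "0 < r" using r0 by simp
  obtain \<alpha>0 where \<alpha>0': "\<alpha>0 ^ r = c" using root_ex[OF rp, of c] by metis
  then have \<alpha>0: "c = \<alpha>0 ^ r" by simp
  define \<beta>0 where "\<beta>0 = \<alpha>0 ^ t"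
  have \<beta>2: "\<beta>0 ^ 2 = c" using \<alpha>0 r by (simp add: \<beta>0_def pow_2t)
  have t0: "t \<noteq> 0" using t by simp
  obtain \<omega> :: complex where \<omega>': "\<omega> ^ t = - 1" using root_ex[OF t, of "- 1"] by metis
  then have \<omega>: "- 1 = \<omega> ^ t" by simp
  obtain \<eta> :: complex where \<eta>': "\<eta> ^ t = \<i>" using root_ex[OF t, of "\<i>"] by metis
  then have \<eta>: "\<i> = \<eta> ^ t" by simp
  obtain \<eta>' :: complex where \<eta>'': "\<eta>' ^ t = - \<i>" using root_ex[OF t, of "- \<i>"] by metis
  then have \<eta>': "- \<i> = \<eta>' ^ t" by simp
  have pw: "z ^ r = (z ^ t) ^ 2" for z :: complex using r by (simp add: pow_2t)
  have Hf: "\<not> 0 < Re (- b * z ^ t)" if "z ^ r = c" for z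
    using H that unfolding c_def by blast
  have Hg: "\<not> 0 < Re (- (- b) * z ^ t)" if "z ^ r = - c" for z
    using H that unfolding mc by blast
  have f1: "\<not> 0 < Re (- b * \<beta>0)"
    using Hf[of \<alpha>0] \<alpha>0 by (simp add: \<beta>0_def)
  have f2: "\<not> 0 < Re (- b * (- \<beta>0))"
  proof -
    have "(\<alpha>0 * \<omega>) ^ t = - \<beta>0" using \<omega>[symmetric] by (simp add: power_mult_distrib \<beta>0_def)
    moreover have "(\<alpha>0 * \<omega>) ^ r = c" using pw[of "\<alpha>0 * \<omega>"] \<beta>2 calculation by simp
    ultimately show ?thesis using Hf[of "\<alpha>0 * \<omega>"] by simp
  qed
  have g1: "\<not> 0 < Re (b * (\<i> * \<beta>0))"
  proof -
    have ht1: "(\<alpha>0 * \<eta>) ^ t = \<i> * \<beta>0" using \<eta>[symmetric] by (simp add: power_mult_distrib \<beta>0_def mult.commute)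
    moreover have "(\<alpha>0 * \<eta>) ^ r = - c"
    proof -
      have "(\<alpha>0 * \<eta>) ^ r = ((\<alpha>0 * \<eta>) ^ t) ^ 2" by (rule pw)
      also have "\<dots> = (\<i> * \<beta>0) ^ 2" using ht1 by simp
      also have "\<dots> = - c" using \<beta>2 by (simp add: power_mult_distrib)
      finally show ?thesis .
    qed
    ultimately show ?thesis using Hg[of "\<alpha>0 * \<eta>"] by simp
  qed
  have g2: "\<not> 0 < Re (b * (- \<i> * \<beta>0))"
  proof -
    have ht2: "(\<alpha>0 * \<eta>') ^ t = - \<i> * \<beta>0" using \<eta>'[symmetric] by (simp add: power_mult_distrib \<beta>0_def mult.commute)
    moreover have "(\<alpha>0 * \<eta>') ^ r = - c"
    proof -
      have "(\<alpha>0 * \<eta>') ^ r = ((\<alpha>0 * \<eta>') ^ t) ^ 2" by (rule pw)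
      also have "\<dots> = (- \<i> * \<beta>0) ^ 2" using ht2 by simp
      also have "\<dots> = - c" using \<beta>2 by (simp add: power_mult_distrib)
      finally show ?thesis .
    qed
    ultimately show ?thesis using Hg[of "\<alpha>0 * \<eta>'"] by simp
  qed
  have "Re (b * \<beta>0) = 0" using f1 f2 by simp
  moreover have "Im (b * \<beta>0) = 0" using g1 g2 by (simp add: algebra_simps)
  ultimately have "b * \<beta>0 = 0" by (simp add: complex_eq_iff)
  then have "\<beta>0 = 0" using b by simp
  then show False using \<beta>2 c0 by simp
qed

lemma holo2_mono: "holo2_on U h \<Longrightarrow> V \<subseteq> U \<Longrightarrow> holo2_on V h"
  by (auto simp: holo2_on_def)

theorem lemma3p1:
  fixes f g :: "c2 \<Rightarrow> c2" and p v :: c2 and k r t :: nat and s :: enat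
  assumes germ: "holo_germ_fixing f p"
    and tangent: "(f has_derivative (\<lambda>x. x)) (at p)"
    and order: "has_order f p (k + 1)"
    and cond1: "char_dir_degree f p k v s"
    and cond2: "nondeg_degree f p k v r" and kr: "k < r" and rs: "enat r < s"
    and cond3: "order_one_degree f p k v t" and kt: "k \<le> t" and tr: "t \<le> r"
    and ginv_germ: "holo_germ_fixing g p"
    and ginv1: "eventually (\<lambda>x. g (f x) = x) (nhds p)"
    and ginv2: "eventually (\<lambda>x. f (g x) = x) (nhds p)"
  shows "(g has_derivative (\<lambda>x. x)) (at p) \<and> has_order g p (k + 1) \<and>
         char_dir_degree g p k v s \<and> nondeg_degree g p k v r \<and> order_one_degree g p k v t \<and>
         (r = t \<longrightarrow> (transv_attracting f p k r t v \<longleftrightarrow> transv_attracting g p k r t v)) \<and>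
         (r = 2 * t \<longrightarrow> transv_attracting f p k r t v \<or> transv_attracting g p k r t v)"
proof -
  obtain Uf where Uf: "open Uf" "p \<in> Uf" "holo2_on Uf f" and fp: "f p = p"
    using germ unfolding holo_germ_fixing_def by blast
  obtain Ug where Ug: "open Ug" "p \<in> Ug" "holo2_on Ug g" and gp: "g p = p"
    using ginv_germ unfolding holo_germ_fixing_def by blast
  obtain S1 where S1: "open S1" "p \<in> S1" "\<And>x. x \<in> S1 \<Longrightarrow> g (f x) = x"
    using ginv1 unfolding eventually_nhds by blast
  have gd: "(g has_derivative (\<lambda>x. x)) (at p)"
    by (rule inv_deriv[OF Ug(3) Ug(1) Ug(2) gp tangent ginv2])
  have ordg: "has_order g p (k + 1)"
    by (rule order_inv[OF Uf(3) Uf(1) Uf(2) fp tangent Ug(3) Ug(1) Ug(2) gp gd ginv1 ginv2 order])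
  define U where "U = Uf \<inter> Ug \<inter> S1"
  have v0: "v \<noteq> 0" using cond2 unfolding nondeg_degree_def nondegenerate_char_dir_def by auto
  interpret L: LA f g p v U
  proof
    show "open U" using Uf Ug S1 by (auto simp: U_def)
    show "p \<in> U" using Uf Ug S1 by (auto simp: U_def)
    show "holo2_on U f" by (rule holo2_mono[OF Uf(3)]) (auto simp: U_def)
    show "holo2_on U g" by (rule holo2_mono[OF Ug(3)]) (auto simp: U_def)
    show "f p = p" by (rule fp)
    show "g p = p" by (rule gp)
    show "(f has_derivative (\<lambda>x. x)) (at p)" by (rule tangent)
    show "(g has_derivative (\<lambda>x. x)) (at p)" by (rule gd)
    show "\<And>x. x \<in> U \<Longrightarrow> g (f x) = x" using S1 by (auto simp: U_def)
    show "v \<noteq> 0" by (rule v0)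
  qed
  have M: "char_dir_degree g p k v s \<and> nondeg_degree g p k v r \<and> order_one_degree g p k v t \<and>
    coef_a g p v r = - coef_a f p v r \<and> coef_b g p v t = - coef_b f p v t \<and>
    coef_a f p v r \<noteq> 0 \<and> coef_b f p v t \<noteq> 0"
    by (rule L.main_LA[OF order cond1 cond2 kr rs cond3 kt tr])
  have tr1: "r = t \<longrightarrow> (transv_attracting f p k r t v \<longleftrightarrow> transv_attracting g p k r t v)"
  proof
    assume rt: "r = t"
    have ga: "coef_a g p v r = - coef_a f p v r" and gb: "coef_b g p v t = - coef_b f p v t" using M by auto
    have nlt: "\<not> t < r" using rt by simp
    show "transv_attracting f p k r t v \<longleftrightarrow> transv_attracting g p k r t v"
      unfolding transv_attracting_def Let_def ga gb if_not_P[OF nlt] by simp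
  qed
  have k1: "1 \<le> k" using order unfolding has_order_def by auto
  have tr2: "r = 2 * t \<longrightarrow> transv_attracting f p k r t v \<or> transv_attracting g p k r t v"
  proof
    assume r2: "r = 2 * t"
    have t0: "0 < t" using k1 kt by simp
    have tlr: "t < r" using r2 t0 by simp
    have D: "(\<exists>\<alpha>. \<alpha> ^ r = - 1 / (coef_a f p v r * of_nat r) \<and> 0 < Re (- coef_b f p v t * \<alpha> ^ t)) \<or>
         (\<exists>\<alpha>. \<alpha> ^ r = - 1 / (- coef_a f p v r * of_nat r) \<and> 0 < Re (- (- coef_b f p v t) * \<alpha> ^ t))"
      by (rule transv_disj) (use M t0 r2 in auto)
    have ga: "coef_a g p v r = - coef_a f p v r" and gb: "coef_b g p v t = - coef_b f p v t" using M by auto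
    show "transv_attracting f p k r t v \<or> transv_attracting g p k r t v"
      using D unfolding transv_attracting_def Let_def ga gb if_P[OF tlr] .
  qed
  show ?thesis using gd ordg M tr1 tr2 by blast
qed


end
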